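(* Let $n\ge2$, $h=0$, $\epsilon\in[-1,1]$. If $n$ is even, let $C^*=C(\tfrac n2,0,0)\cup C(0,\tfrac n2,0)\cup C(n,\tfrac n2,\tfrac n2)\cup C(\tfrac n2,n,\tfrac n2)$. If $n$ is odd, let $C^*=C(\tfrac{n+1}2,0,0)\cup C(0,\tfrac{n+1}2,0)\cup C(n,\tfrac{n-1}2,\tfrac{n-1}2)\cup C(\tfrac{n-1}2,n,\tfrac{n-1}2)$ when $\epsilon\ge0$, and $C^*=C(\tfrac{n-1}2,0,0)\cup C(0,\tfrac{n-1}2,0)\cup C(n,\tfrac{n+1}2,\tfrac{n+1}2)\cup C(\tfrac{n+1}2,n,\tfrac{n+1}2)$ when $\epsilon<0$. Then for any distinct $s_1,s_2\in\mathcal X_s$, the set $C^*$ is a gate for the transition from $s_1$ to $s_2$.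
   Context: Setup. Fix an integer $n\ge2$, $\epsilon\in[-1,1]$, $h\in[0,1]$. The graph $\mathcal G(2,n)$ has vertex set $V=V^{(1)}\cup V^{(2)}$ with $V^{(1)}=\{1,\dots,n\}$, $V^{(2)}=\{n+1,\dots,2n\}$; its edge set is $E=E_{\mathrm{int}}\cup E_{\mathrm{cross}}$, where $E_{\mathrm{int}}$ consists of all pairs of distinct vertices in the same $V^{(k)}$ and $E_{\mathrm{cross}}=\{\{i,i+n\}:1\le i\le n\}$. The configuration space is $\mathcal X=\{-1,+1\}^V$ and $H(\sigma)=-\sum_{\{i,j\}\in E_{\mathrm{int}}}\sigma_i\sigma_j-\epsilon\sum_{\{i,j\}\in E_{\mathrm{cross}}}\sigma_i\sigma_j-h\sum_{i\in V}\sigma_i$. For integers $0\le p_1,p_2\le n$ and $a$, $C(p_1,p_2,a)$ is the set of configurations with exactly $p_1$ vertices of spin $+1$ in $V^{(1)}$, exactly $p_2$ vertices of spin $+1$ in $V^{(2)}$, and exactly $a$ cross-edges both of whose endpoints have spin $+1$. $\mathbf{+1},\mathbf{-1}$ are the all-plus and all-minus configurations; $\mathbf{\pm1}$ equals $+1$ on $V^{(1)}$ and $-1$ on $V^{(2)}$, $\mathbf{\mp1}$ the reverse. The stable states $\mathcal X_s$ are the global minimizers of $H$. Paths and gates. Two configurations are neighbours if they differ at exactly one vertex; a path is a finite sequence of configurations with consecutive ones neighbours. $\Phi(\eta,\eta')=\min_{\omega:\eta\to\eta'}\max_{\zeta\in\omega}H(\zeta)$. The optimal paths $(\eta\to\eta')_{opt}$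 are the paths from $\eta$ to $\eta'$ with $\max_{\xi\in\omega}H(\xi)=\Phi(\eta,\eta')$. The minimal saddles $\mathcal S(\eta,\eta')$ are the configurations $\zeta$ lying on some optimal path $\omega$ with $H(\zeta)=\max_{\xi\in\omega}H(\xi)$. A set $\mathcal W$ is a gate for the transition $\eta\to\eta'$ if $\mathcal W\subseteq\mathcal S(\eta,\eta')$ and every optimal path from $\eta$ to $\eta'$ intersects $\mathcal W$. *)

theory Defs
  imports Complex_Main
begin

text \<open>Vertices are the naturals 1..2n;
  a configuration is a function nat => int with values in {-1,1} on the vertex
  set and value 0 outside it (canonical representation).\<close>

definition verts :: "nat \<Rightarrow> nat set" where
  "verts n = {1..2*n}"

definition block1 :: "nat \<Rightarrow> nat set" where
  "block1 n = {1..n}"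

definition block2 :: "nat \<Rightarrow> nat set" where
  "block2 n = {n+1..2*n}"

definition E_int :: "nat \<Rightarrow> (nat \<times> nat) set" where
  "E_int n = {(i,j). i < j \<and> ((i \<in> block1 n \<and> j \<in> block1 n) \<or> (i \<in> block2 n \<and> j \<in> block2 n))}"

definition E_cross :: "nat \<Rightarrow> (nat \<times> nat) set" where
  "E_cross n = {(i, i+n) | i. i \<in> block1 n}"

definition configs :: "nat \<Rightarrow> (nat \<Rightarrow> int) set" where
  "configs n = {\<sigma>. (\<forall>i\<in>verts n. \<sigma> i = 1 \<or> \<sigma> i = -1) \<and> (\<forall>i. i \<notin> verts n \<longrightarrow> \<sigma> i = 0)}"

definition Ham :: "nat \<Rightarrow> real \<Rightarrow> real \<Rightarrow> (nat \<Rightarrow> int) \<Rightarrow> real" where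
  "Ham n \<epsilon> h \<sigma> =
     - (\<Sum>(i,j)\<in>E_int n. real_of_int (\<sigma> i * \<sigma> j))
     - \<epsilon> * (\<Sum>(i,j)\<in>E_cross n. real_of_int (\<sigma> i * \<sigma> j))
     - h * (\<Sum>i\<in>verts n. real_of_int (\<sigma> i))"

definition stable_states :: "nat \<Rightarrow> real \<Rightarrow> real \<Rightarrow> (nat \<Rightarrow> int) set" where
  "stable_states n \<epsilon> h =
     {\<sigma> \<in> configs n. \<forall>\<tau>\<in>configs n. Ham n \<epsilon> h \<sigma> \<le> Ham n \<epsilon> h \<tau>}"

definition neighbours :: "nat \<Rightarrow> (nat \<Rightarrow> int) \<Rightarrow> (nat \<Rightarrow> int) \<Rightarrow> bool" where
  "neighbours n \<sigma> \<tau> \<longleftrightarrow> \<sigma> \<in> configs n \<and> \<tau> \<in> configs n \<and>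
     card {i \<in> verts n. \<sigma> i \<noteq> \<tau> i} = 1"

definition is_path :: "nat \<Rightarrow> (nat \<Rightarrow> int) \<Rightarrow> (nat \<Rightarrow> int) \<Rightarrow> (nat \<Rightarrow> int) list \<Rightarrow> bool" where
  "is_path n \<eta> \<eta>' \<omega> \<longleftrightarrow> \<omega> \<noteq> [] \<and> hd \<omega> = \<eta> \<and> last \<omega> = \<eta>' \<and>
     set \<omega> \<subseteq> configs n \<and>
     (\<forall>k. Suc k < length \<omega> \<longrightarrow> neighbours n (\<omega> ! k) (\<omega> ! Suc k))"

definition path_height :: "nat \<Rightarrow> real \<Rightarrow> real \<Rightarrow> (nat \<Rightarrow> int) list \<Rightarrow> real" where
  "path_height n \<epsilon> h \<omega> = Max (Ham n \<epsilon> h ` set \<omega>)"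

definition comm_height :: "nat \<Rightarrow> real \<Rightarrow> real \<Rightarrow> (nat \<Rightarrow> int) \<Rightarrow> (nat \<Rightarrow> int) \<Rightarrow> real" where
  "comm_height n \<epsilon> h \<eta> \<eta>' = Inf {path_height n \<epsilon> h \<omega> | \<omega>. is_path n \<eta> \<eta>' \<omega>}"

definition opt_paths :: "nat \<Rightarrow> real \<Rightarrow> real \<Rightarrow> (nat \<Rightarrow> int) \<Rightarrow> (nat \<Rightarrow> int) \<Rightarrow> (nat \<Rightarrow> int) list set" where
  "opt_paths n \<epsilon> h \<eta> \<eta>' =
     {\<omega>. is_path n \<eta> \<eta>' \<omega> \<and> path_height n \<epsilon> h \<omega> = comm_height n \<epsilon> h \<eta> \<eta>'}"

definition min_saddles :: "nat \<Rightarrow> real \<Rightarrow> real \<Rightarrow> (nat \<Rightarrow> int) \<Rightarrow> (nat \<Rightarrow> int) \<Rightarrow> (nat \<Rightarrow> int) set" where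
  "min_saddles n \<epsilon> h \<eta> \<eta>' =
     {\<zeta>. \<exists>\<omega>\<in>opt_paths n \<epsilon> h \<eta> \<eta>'. \<zeta> \<in> set \<omega> \<and> Ham n \<epsilon> h \<zeta> = path_height n \<epsilon> h \<omega>}"

definition is_gate :: "nat \<Rightarrow> real \<Rightarrow> real \<Rightarrow> (nat \<Rightarrow> int) set \<Rightarrow> (nat \<Rightarrow> int) \<Rightarrow> (nat \<Rightarrow> int) \<Rightarrow> bool" where
  "is_gate n \<epsilon> h W \<eta> \<eta>' \<longleftrightarrow> W \<subseteq> min_saddles n \<epsilon> h \<eta> \<eta>' \<and>
     (\<forall>\<omega>\<in>opt_paths n \<epsilon> h \<eta> \<eta>'. set \<omega> \<inter> W \<noteq> {})"

definition Ccl :: "nat \<Rightarrow> nat \<Rightarrow> nat \<Rightarrow> nat \<Rightarrow> (nat \<Rightarrow> int) set" where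
  "Ccl n p1 p2 a = {\<sigma> \<in> configs n.
      card {i \<in> block1 n. \<sigma> i = 1} = p1 \<and>
      card {i \<in> block2 n. \<sigma> i = 1} = p2 \<and>
      card {i \<in> block1 n. \<sigma> i = 1 \<and> \<sigma> (i+n) = 1} = a}"

definition Cstar :: "nat \<Rightarrow> real \<Rightarrow> (nat \<Rightarrow> int) set" where
  "Cstar n \<epsilon> =
    (if even n then
       Ccl n (n div 2) 0 0 \<union> Ccl n 0 (n div 2) 0 \<union> Ccl n n (n div 2) (n div 2) \<union> Ccl n (n div 2) n (n div 2)
     else if \<epsilon> \<ge> 0 then
       Ccl n ((n+1) div 2) 0 0 \<union> Ccl n 0 ((n+1) div 2) 0 \<union>
       Ccl n n ((n-1) div 2) ((n-1) div 2) \<union> Ccl n ((n-1) div 2) n ((n-1) div 2)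
     else
       Ccl n ((n-1) div 2) 0 0 \<union> Ccl n 0 ((n-1) div 2) 0 \<union>
       Ccl n n ((n+1) div 2) ((n+1) div 2) \<union> Ccl n ((n+1) div 2) n ((n+1) div 2))"

end

theory Submission
  imports Defs
begin


definition pairs :: "nat \<Rightarrow> nat \<Rightarrow> (nat\<times>nat) set" where
  "pairs a m = {(i,j). a < i \<and> i < j \<and> j \<le> a+m}"

lemma pairs_Suc: "pairs a (Suc m) = pairs a m \<union> (\<lambda>i. (i, a + Suc m)) ` {a<..a+m}"
  unfolding pairs_def by auto

lemma finite_pairs: "finite (pairs a m)"
proof -
  have "pairs a m \<subseteq> {..a+m} \<times> {..a+m}" unfolding pairs_def by auto
  thus ?thesis by (rule finite_subset) auto
qed

lemma pairs_sum:
  fixes f :: "nat \<Rightarrow> int"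
  assumes "\<forall>i\<in>{a<..a+m}. f i = 1 \<or> f i = -1"
  shows "2 * (\<Sum>(i,j)\<in>pairs a m. f i * f j) = (\<Sum>i\<in>{a<..a+m}. f i)^2 - int m"
  using assms
proof (induction m)
  case 0
  have "pairs a 0 = {}" by (auto simp: pairs_def)
  then show ?case by simp
next
  case (Suc m)
  let ?y = "f (a + Suc m)"
  let ?T = "\<Sum>i\<in>{a<..a+m}. f i"
  have y: "?y * ?y = 1" using Suc.prems by (metis add_Suc_right atLeastAtMost_iff greaterThanAtMost_iff le_refl less_add_Suc1 mult_minus_left mult_1 minus_minus)
  have IH: "2 * (\<Sum>(i,j)\<in>pairs a m. f i * f j) = ?T^2 - int m"
    using Suc by auto
  have disj: "pairs a m \<inter> (\<lambda>i. (i, a + Suc m)) ` {a<..a+m} = {}" unfolding pairs_def by auto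
  have inj: "inj_on (\<lambda>i. (i, a + Suc m)) {a<..a+m}" by (auto simp: inj_on_def)
  have "(\<Sum>(i,j)\<in>pairs a (Suc m). f i * f j) = (\<Sum>(i,j)\<in>pairs a m. f i * f j) + (\<Sum>(i,j)\<in>(\<lambda>i. (i, a + Suc m)) ` {a<..a+m}. f i * f j)"
    unfolding pairs_Suc by (rule sum.union_disjoint) (use disj finite_pairs in auto)
  also have "(\<Sum>(i,j)\<in>(\<lambda>i. (i, a + Suc m)) ` {a<..a+m}. f i * f j) = (\<Sum>i\<in>{a<..a+m}. f i * ?y)"
    by (subst sum.reindex[OF inj]) simp
  also have "\<dots> = ?T * ?y" by (simp add: sum_distrib_right)
  finally have e: "(\<Sum>(i,j)\<in>pairs a (Suc m). f i * f j) = (\<Sum>(i,j)\<in>pairs a m. f i * f j) + ?T * ?y" .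
  have s: "(\<Sum>i\<in>{a<..a+Suc m}. f i) = ?T + ?y"
  proof -
    have "{a<..a+Suc m} = insert (a + Suc m) {a<..a+m}" by auto
    thus ?thesis by simp
  qed
  show ?case unfolding e s using IH y by (simp add: power2_eq_square algebra_simps)
qed

lemma ind_card: "finite B \<Longrightarrow> (\<Sum>i\<in>B. if P i then (1::int) else 0) = int (card {i\<in>B. P i})"
  by (simp add: sum.inter_filter[symmetric])

lemma sum_pm:
  fixes f :: "nat \<Rightarrow> int"
  assumes "finite B" "\<forall>i\<in>B. f i = 1 \<or> f i = -1"
  shows "(\<Sum>i\<in>B. f i) = 2 * int (card {i\<in>B. f i = 1}) - int (card B)"
proof -
  have "(\<Sum>i\<in>B. f i) = (\<Sum>i\<in>B. 2 * (if f i = 1 then 1 else 0) - 1)"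
    by (rule sum.cong) (use assms(2) in auto)
  also have "\<dots> = 2 * (\<Sum>i\<in>B. if f i = 1 then 1 else 0) - int (card B)"
    by (simp add: sum_subtractf sum_distrib_left)
  finally show ?thesis using ind_card[OF assms(1)] by simp
qed

definition P1 :: "nat \<Rightarrow> (nat \<Rightarrow> int) \<Rightarrow> nat" where
  "P1 n \<sigma> = card {i \<in> block1 n. \<sigma> i = 1}"
definition P2 :: "nat \<Rightarrow> (nat \<Rightarrow> int) \<Rightarrow> nat" where
  "P2 n \<sigma> = card {i \<in> block2 n. \<sigma> i = 1}"
definition AA :: "nat \<Rightarrow> (nat \<Rightarrow> int) \<Rightarrow> nat" where
  "AA n \<sigma> = card {i \<in> block1 n. \<sigma> i = 1 \<and> \<sigma> (i+n) = 1}"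

definition En :: "nat \<Rightarrow> real \<Rightarrow> nat \<Rightarrow> nat \<Rightarrow> nat \<Rightarrow> real" where
  "En n \<epsilon> p1 p2 a = real n - ((2*real p1 - real n)^2 + (2*real p2 - real n)^2)/2
      - \<epsilon> * (real n - 2*(real p1 + real p2 - 2*real a))"

lemma cfg_val: "\<sigma> \<in> configs n \<Longrightarrow> i \<in> verts n \<Longrightarrow> \<sigma> i = 1 \<or> \<sigma> i = -1"
  unfolding configs_def by auto

lemma Eint_eq: "E_int n = pairs 0 n \<union> pairs n n"
  unfolding E_int_def pairs_def block1_def block2_def by auto

lemma Eint_sum:
  assumes "\<sigma> \<in> configs n"
  shows "(\<Sum>(i,j)\<in>E_int n. real_of_int (\<sigma> i * \<sigma> j)) =
     ((2*real (P1 n \<sigma>) - real n)^2 - real n)/2 + ((2*real (P2 n \<sigma>) - real n)^2 - real n)/2"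
proof -
  have disj: "pairs 0 n \<inter> pairs n n = {}" unfolding pairs_def by auto
  have b1: "{0<..0+n} = block1 n" unfolding block1_def by auto
  have b2: "{n<..n+n} = block2 n" unfolding block2_def by auto
  have v1: "\<forall>i\<in>{0<..0+n}. \<sigma> i = 1 \<or> \<sigma> i = -1" using cfg_val[OF assms] unfolding verts_def by auto
  have v2: "\<forall>i\<in>{n<..n+n}. \<sigma> i = 1 \<or> \<sigma> i = -1" using cfg_val[OF assms] unfolding verts_def by auto
  have s1: "(\<Sum>i\<in>{0<..0+n}. \<sigma> i) = 2 * int (P1 n \<sigma>) - int n"
    using sum_pm[of "{0<..0+n}" \<sigma>] v1 unfolding b1 P1_def by (simp add: block1_def)
  have s2: "(\<Sum>i\<in>{n<..n+n}. \<sigma> i) = 2 * int (P2 n \<sigma>) - int n"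
    using sum_pm[of "{n<..n+n}" \<sigma>] v2 unfolding b2 P2_def by (simp add: block2_def)
  have "(\<Sum>(i,j)\<in>E_int n. real_of_int (\<sigma> i * \<sigma> j)) = real_of_int (\<Sum>(i,j)\<in>E_int n. \<sigma> i * \<sigma> j)"
    by (simp add: of_int_sum case_prod_beta')
  also have "(\<Sum>(i,j)\<in>E_int n. \<sigma> i * \<sigma> j) = (\<Sum>(i,j)\<in>pairs 0 n. \<sigma> i * \<sigma> j) + (\<Sum>(i,j)\<in>pairs n n. \<sigma> i * \<sigma> j)"
    unfolding Eint_eq by (rule sum.union_disjoint) (use disj finite_pairs in auto)
  finally have e: "(\<Sum>(i,j)\<in>E_int n. real_of_int (\<sigma> i * \<sigma> j)) = real_of_int (\<Sum>(i,j)\<in>pairs 0 n. \<sigma> i * \<sigma> j) + real_of_int (\<Sum>(i,j)\<in>pairs n n. \<sigma> i * \<sigma> j)" by simp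
  have q1: "2 * (\<Sum>(i,j)\<in>pairs 0 n. \<sigma> i * \<sigma> j) = (2 * int (P1 n \<sigma>) - int n)^2 - int n"
    using pairs_sum[OF v1] s1 by simp
  have q2: "2 * (\<Sum>(i,j)\<in>pairs n n. \<sigma> i * \<sigma> j) = (2 * int (P2 n \<sigma>) - int n)^2 - int n"
    using pairs_sum[OF v2] s2 by simp
  have r1: "real_of_int (\<Sum>(i,j)\<in>pairs 0 n. \<sigma> i * \<sigma> j) = ((2*real (P1 n \<sigma>) - real n)^2 - real n)/2"
    using arg_cong[OF q1, of real_of_int] by simp
  have r2: "real_of_int (\<Sum>(i,j)\<in>pairs n n. \<sigma> i * \<sigma> j) = ((2*real (P2 n \<sigma>) - real n)^2 - real n)/2"
    using arg_cong[OF q2, of real_of_int] by simp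
  show ?thesis unfolding e r1 r2 ..
qed

lemma P2_shift: "card {i\<in>block1 n. \<sigma> (i+n) = 1} = P2 n \<sigma>"
proof -
  have im: "(\<lambda>i. i+n) ` {i\<in>block1 n. \<sigma> (i+n) = 1} = {i \<in> block2 n. \<sigma> i = 1}"
  proof (rule set_eqI, rule iffI)
    fix j assume "j \<in> (\<lambda>i. i+n) ` {i\<in>block1 n. \<sigma> (i+n) = 1}"
    then obtain i where "i \<in> block1 n" "\<sigma> (i+n) = 1" "j = i + n" by blast
    thus "j \<in> {i \<in> block2 n. \<sigma> i = 1}" unfolding block1_def block2_def by simp
  next
    fix j assume j: "j \<in> {i \<in> block2 n. \<sigma> i = 1}"
    then have "j - n \<in> {i\<in>block1 n. \<sigma> (i+n) = 1}" "j = j - n + n" unfolding block1_def block2_def by auto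
    thus "j \<in> (\<lambda>i. i+n) ` {i\<in>block1 n. \<sigma> (i+n) = 1}" by (rule rev_image_eqI)
  qed
  have "inj_on (\<lambda>i. i+n) {i\<in>block1 n. \<sigma> (i+n) = 1}" by (rule inj_onI) simp
  from card_image[OF this] show ?thesis unfolding P2_def im by simp
qed

lemma Ecross_sum:
  assumes "\<sigma> \<in> configs n"
  shows "(\<Sum>(i,j)\<in>E_cross n. real_of_int (\<sigma> i * \<sigma> j)) =
     real n - 2*(real (P1 n \<sigma>) + real (P2 n \<sigma>) - 2*real (AA n \<sigma>))"
proof -
  have ec: "E_cross n = (\<lambda>i. (i, i+n)) ` block1 n" unfolding E_cross_def by auto
  have inj: "inj_on (\<lambda>i. (i, i+n)) (block1 n)" by (auto simp: inj_on_def)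
  have fin: "finite (block1 n)" unfolding block1_def by simp
  have "(\<Sum>(i,j)\<in>E_cross n. real_of_int (\<sigma> i * \<sigma> j)) = (\<Sum>i\<in>block1 n. real_of_int (\<sigma> i * \<sigma> (i+n)))"
    unfolding ec by (subst sum.reindex[OF inj]) simp
  also have "\<dots> = (\<Sum>i\<in>block1 n. 1 - 2*((if \<sigma> i = 1 then 1 else 0) + (if \<sigma> (i+n) = 1 then 1 else 0)
        - 2 * (if \<sigma> i = 1 \<and> \<sigma> (i+n) = 1 then 1 else 0)))"
  proof (rule sum.cong)
    fix i assume i: "i \<in> block1 n"
    have "\<sigma> i = 1 \<or> \<sigma> i = -1" "\<sigma> (i+n) = 1 \<or> \<sigma> (i+n) = -1"
      using cfg_val[OF assms] i unfolding verts_def block1_def by auto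
    thus "real_of_int (\<sigma> i * \<sigma> (i+n)) = 1 - 2*((if \<sigma> i = 1 then 1 else 0) + (if \<sigma> (i+n) = 1 then 1 else 0)
        - 2 * (if \<sigma> i = 1 \<and> \<sigma> (i+n) = 1 then 1 else 0))" by auto
  qed simp
  also have "\<dots> = real n - 2*((\<Sum>i\<in>block1 n. if \<sigma> i = 1 then 1 else 0) + (\<Sum>i\<in>block1 n. if \<sigma> (i+n) = 1 then 1 else 0)
        - 2 * (\<Sum>i\<in>block1 n. if \<sigma> i = 1 \<and> \<sigma> (i+n) = 1 then 1 else 0))"
    by (simp add: sum_subtractf sum.distrib sum_distrib_left block1_def)
  also have "\<dots> = real n - 2*(real (P1 n \<sigma>) + real (P2 n \<sigma>) - 2*real (AA n \<sigma>))"
    using fin by (simp add: sum.inter_filter[symmetric] P1_def AA_def P2_shift[symmetric])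
  finally show ?thesis .
qed

lemma Ham_eq:
  assumes "\<sigma> \<in> configs n"
  shows "Ham n \<epsilon> 0 \<sigma> = En n \<epsilon> (P1 n \<sigma>) (P2 n \<sigma>) (AA n \<sigma>)"
  unfolding Ham_def Eint_sum[OF assms] Ecross_sum[OF assms] En_def by (simp add: field_simps)




definition ok :: "nat \<Rightarrow> nat \<Rightarrow> nat \<Rightarrow> nat \<Rightarrow> bool" where
  "ok n p1 p2 a \<longleftrightarrow> p1 \<le> n \<and> p2 \<le> n \<and> a \<le> p1 \<and> a \<le> p2 \<and> p1 + p2 \<le> n + a"

definition cs :: "nat \<Rightarrow> real \<Rightarrow> nat \<Rightarrow> nat \<Rightarrow> nat \<Rightarrow> bool" where
  "cs n \<epsilon> p1 p2 a \<longleftrightarrow>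
    (if even n then
       (p1,p2,a) \<in> {(n div 2, 0, 0), (0, n div 2, 0), (n, n div 2, n div 2), (n div 2, n, n div 2)}
     else if \<epsilon> \<ge> 0 then
       (p1,p2,a) \<in> {((n+1) div 2, 0, 0), (0, (n+1) div 2, 0), (n, (n-1) div 2, (n-1) div 2), ((n-1) div 2, n, (n-1) div 2)}
     else
       (p1,p2,a) \<in> {((n-1) div 2, 0, 0), (0, (n-1) div 2, 0), (n, (n+1) div 2, (n+1) div 2), ((n+1) div 2, n, (n+1) div 2)})"

definition Gam :: "nat \<Rightarrow> real \<Rightarrow> real" where
  "Gam n \<epsilon> = (if even n then real n - (real n)^2/2 else real n - ((real n)^2 + 1)/2 + \<bar>\<epsilon>\<bar>)"

definition bad :: "nat \<Rightarrow> real \<Rightarrow> nat \<Rightarrow> nat \<Rightarrow> nat \<Rightarrow> bool" where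
  "bad n \<epsilon> p1 p2 a \<longleftrightarrow> En n \<epsilon> p1 p2 a > Gam n \<epsilon> \<or> cs n \<epsilon> p1 p2 a"

lemma ok_sym: "ok n p1 p2 a = ok n p2 p1 a" unfolding ok_def by auto
lemma En_sym: "En n \<epsilon> p1 p2 a = En n \<epsilon> p2 p1 a" unfolding En_def by (simp add: algebra_simps)
lemma cs_sym: "cs n \<epsilon> p1 p2 a = cs n \<epsilon> p2 p1 a" unfolding cs_def by auto
lemma bad_sym: "bad n \<epsilon> p1 p2 a = bad n \<epsilon> p2 p1 a" unfolding bad_def using En_sym[of n \<epsilon> p1 p2 a] cs_sym[of n \<epsilon> p1 p2 a] by simp

lemma X_bounds:
  assumes "ok n p1 p2 a"
  shows "-real n \<le> real n - 2*(real p1 + real p2 - 2*real a)" "real n - 2*(real p1 + real p2 - 2*real a) \<le> real n"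
proof -
  have "real p1 + real p2 \<le> real n + real a" "real a \<le> real p1" "real a \<le> real p2"
    using assms unfolding ok_def by (simp_all add: of_nat_add[symmetric] del: of_nat_add)
  moreover have "real a \<ge> 0" by simp
  ultimately show "-real n \<le> real n - 2*(real p1 + real p2 - 2*real a)" by argo
  show "real n - 2*(real p1 + real p2 - 2*real a) \<le> real n" using \<open>real a \<le> real p1\<close> \<open>real a \<le> real p2\<close> by argo
qed

lemma eps_mul: assumes "\<bar>e\<bar> \<le> (1::real)" "-N \<le> x" "x \<le> N" shows "e*x \<le> N" "-N \<le> e*x"
proof -
  have "\<bar>e*x\<bar> = \<bar>e\<bar>*\<bar>x\<bar>" by (simp add: abs_mult)
  also have "\<dots> \<le> 1 * \<bar>x\<bar>" by (rule mult_right_mono) (use assms in auto)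
  finally have "\<bar>e*x\<bar> \<le> N" using assms by auto
  thus "e*x \<le> N" "-N \<le> e*x" by auto
qed

lemma sq_le: assumes "\<bar>s::real\<bar> \<le> N - 2" shows "s^2 \<le> N^2 - 4*N + 4"
proof -
  have "N - 2 \<ge> 0" using assms by auto
  then have "s^2 \<le> (N-2)^2" using assms abs_le_square_iff[of s "N-2"] by auto
  thus ?thesis by (simp add: power2_eq_square algebra_simps)
qed

lemma G_even:
  assumes "even n" "n \<ge> 2" "ok n p1 p2 a" "2*p1 = n" "2*p2 \<noteq> n" "\<bar>\<epsilon>\<bar> \<le> 1"
  shows "bad n \<epsilon> p1 p2 a"
proof -
  obtain m where m: "n = 2*m" using assms(1) by blast
  have p1: "p1 = m" using assms(4) m by simp
  consider "p2 = 0" | "p2 = n" | "0 < p2 \<and> p2 < n" using assms(3) unfolding ok_def by linarith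
  then show ?thesis
  proof cases
    case 1
    then have "a = 0" using assms(3) unfolding ok_def by simp
    then show ?thesis using 1 assms(1) p1 m unfolding bad_def cs_def by simp
  next
    case 2
    then have "a = p1" using assms(3) unfolding ok_def by simp
    then show ?thesis using 2 assms(1) p1 m unfolding bad_def cs_def by simp
  next
    case 3
    have pm: "p2 \<noteq> m" using assms(5) m by simp
    have r1: "2*real p1 - real n = 0" using assms(4) by (simp add: of_nat_mult[symmetric] del: of_nat_mult)
    have "p2 + 1 \<le> m \<or> m + 1 \<le> p2" using pm by linarith
    then have ab: "\<bar>2*real p2 - real n\<bar> \<le> real n - 2" "real n \<ge> 4"
      using 3 m by (auto simp: abs_if)
    have sq: "(2*real p2 - real n)^2 \<le> (real n)^2 - 4*real n + 4" by (rule sq_le[OF ab(1)])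
    have ex: "\<epsilon> * (real n - 2*(real p1 + real p2 - 2*real a)) \<le> real n"
      using eps_mul(1)[OF assms(6) X_bounds[OF assms(3)]] .
    have "En n \<epsilon> p1 p2 a > Gam n \<epsilon>"
      unfolding En_def Gam_def r1 using assms(1) sq ex ab(2) by simp
    thus ?thesis unfolding bad_def by simp
  qed
qed

lemma aux_pos:
  fixes S N e X :: real
  assumes "S^2 \<le> N^2 - 4*N + 4" "0 \<le> e" "e \<le> 1" "X \<le> N - 2" "N \<ge> 3"
  shows "N - (1 + S^2)/2 - e*X > N - (N^2+1)/2 + e"
proof -
  have "e*X \<le> e*(N-2)" by (rule mult_left_mono) (use assms in auto)
  then have f1: "e*X \<le> e*N - 2*e" by (simp add: algebra_simps)
  have "e*N \<le> 1*N" by (rule mult_right_mono) (use assms in auto)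
  then have f2: "e*N \<le> N" by simp
  show ?thesis using f1 f2 assms(1,2,5) by argo
qed

lemma aux_neg:
  fixes S N e X :: real
  assumes "S^2 \<le> N^2 - 4*N + 4" "e < 0" "-1 \<le> e" "X \<ge> 2 - N" "N \<ge> 3"
  shows "N - (1 + S^2)/2 - e*X > N - (N^2+1)/2 - e"
proof -
  have "e*X \<le> e*(2-N)" by (rule mult_left_mono_neg) (use assms in auto)
  then have f1: "e*X \<le> 2*e - e*N" by (simp add: algebra_simps)
  have "-e*N \<le> 1*N" by (rule mult_right_mono) (use assms in auto)
  then have f2: "-(e*N) \<le> N" by simp
  show ?thesis using f1 f2 assms(1,2,5) by argo
qed

lemma G_odd_pos:
  assumes "odd n" "n \<ge> 2" "ok n p1 p2 a" "0 \<le> \<epsilon>" "\<epsilon> \<le> 1"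
    "(2*p1 + 1 = n \<and> 2*p2 > n) \<or> (2*p1 = n + 1 \<and> 2*p2 < n)"
  shows "bad n \<epsilon> p1 p2 a"
proof -
  obtain m where m: "n = 2*m+1" using assms(1) oddE by blast
  have m1: "m \<ge> 1" using m assms(2) by simp
  have d1: "(n-1) div 2 = m" "(n+1) div 2 = m+1" using m by simp_all
  have Gm: "Gam n \<epsilon> = real n - ((real n)^2+1)/2 + \<epsilon>" unfolding Gam_def using assms(1,4) by simp
  have N3: "real n \<ge> 3" using m m1 by simp
  have ineq: "En n \<epsilon> p1 p2 a > Gam n \<epsilon>"
    if "\<bar>2*real p2 - real n\<bar> \<le> real n - 2" "(2*real p1 - real n)^2 = 1" "real p1 + real p2 - 2*real a \<ge> 1"
  proof -
    have sq: "(2*real p2 - real n)^2 \<le> (real n)^2 - 4*real n + 4" by (rule sq_le[OF that(1)])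
    have X: "real n - 2*(real p1 + real p2 - 2*real a) \<le> real n - 2" using that(3) by argo
    show ?thesis unfolding En_def Gm that(2)
      using aux_pos[OF sq assms(4,5) X N3] by (simp add: add_ac)
  qed
  from assms(6) show ?thesis
  proof
    assume A: "2*p1 + 1 = n \<and> n < 2*p2"
    then have p1: "p1 = m" using m by simp
    show ?thesis
    proof (cases "p2 = n")
      case True
      then have "a = p1" using assms(3) unfolding ok_def by simp
      then show ?thesis using True assms(1,4) p1 d1 unfolding bad_def cs_def by simp
    next
      case False
      then have "p2 < n" using assms(3) unfolding ok_def by simp
      then have "\<bar>2*real p2 - real n\<bar> \<le> real n - 2" using A m by (auto simp: abs_if)
      moreover have "(2*real p1 - real n)^2 = 1" using p1 m by (simp add: power2_eq_square algebra_simps)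
      moreover have "p1 + p2 \<ge> 2*a + 1" using assms(3) A p1 m unfolding ok_def by linarith
      then have "real p1 + real p2 - 2*real a \<ge> 1" by (simp add: of_nat_add[symmetric] of_nat_mult[symmetric] del: of_nat_add of_nat_mult)
      ultimately show ?thesis using ineq unfolding bad_def by blast
    qed
  next
    assume A: "2*p1 = n + 1 \<and> 2*p2 < n"
    then have p1: "p1 = m + 1" using m by simp
    show ?thesis
    proof (cases "p2 = 0")
      case True
      then have "a = 0" using assms(3) unfolding ok_def by simp
      then show ?thesis using True assms(1,4) p1 d1 unfolding bad_def cs_def by simp
    next
      case False
      then have "\<bar>2*real p2 - real n\<bar> \<le> real n - 2" using A m by (auto simp: abs_if)
      moreover have "(2*real p1 - real n)^2 = 1" using p1 m by (simp add: power2_eq_square algebra_simps)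
      moreover have "p1 + p2 \<ge> 2*a + 1" using assms(3) A p1 m unfolding ok_def by linarith
      then have "real p1 + real p2 - 2*real a \<ge> 1" by (simp add: of_nat_add[symmetric] of_nat_mult[symmetric] del: of_nat_add of_nat_mult)
      ultimately show ?thesis using ineq unfolding bad_def by blast
    qed
  qed
qed

lemma G_odd_neg:
  assumes "odd n" "n \<ge> 2" "ok n p1 p2 a" "\<epsilon> < 0" "-1 \<le> \<epsilon>"
    "(2*p1 = n + 1 \<and> 2*p2 > n) \<or> (2*p1 + 1 = n \<and> 2*p2 < n)"
  shows "bad n \<epsilon> p1 p2 a"
proof -
  obtain m where m: "n = 2*m+1" using assms(1) oddE by blast
  have m1: "m \<ge> 1" using m assms(2) by simp
  have d1: "(n-1) div 2 = m" "(n+1) div 2 = m+1" using m by simp_all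
  have Gm: "Gam n \<epsilon> = real n - ((real n)^2+1)/2 - \<epsilon>" unfolding Gam_def using assms(1,4) by simp
  have N3: "real n \<ge> 3" using m m1 by simp
  have ineq: "En n \<epsilon> p1 p2 a > Gam n \<epsilon>"
    if "\<bar>2*real p2 - real n\<bar> \<le> real n - 2" "(2*real p1 - real n)^2 = 1" "real p1 + real p2 - 2*real a \<le> real n - 1"
  proof -
    have sq: "(2*real p2 - real n)^2 \<le> (real n)^2 - 4*real n + 4" by (rule sq_le[OF that(1)])
    have X: "real n - 2*(real p1 + real p2 - 2*real a) \<ge> 2 - real n" using that(3) by argo
    show ?thesis unfolding En_def Gm that(2)
      using aux_neg[OF sq assms(4,5) X N3] by (simp add: add_ac)
  qed
  from assms(6) show ?thesis
  proof
    assume A: "2*p1 = n + 1 \<and> n < 2*p2"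
    then have p1: "p1 = m + 1" using m by simp
    show ?thesis
    proof (cases "p2 = n")
      case True
      then have "a = p1" using assms(3) unfolding ok_def by simp
      then show ?thesis using True assms(1,4) p1 d1 unfolding bad_def cs_def by simp
    next
      case False
      then have "p2 < n" using assms(3) unfolding ok_def by simp
      then have "\<bar>2*real p2 - real n\<bar> \<le> real n - 2" using A m by (auto simp: abs_if)
      moreover have "(2*real p1 - real n)^2 = 1" using p1 m by (simp add: power2_eq_square algebra_simps)
      moreover have "p1 + p2 + 1 \<le> n + 2*a" using assms(3) A p1 m unfolding ok_def by linarith
      then have "real p1 + real p2 - 2*real a \<le> real n - 1" by (simp add: of_nat_add[symmetric] of_nat_mult[symmetric] del: of_nat_add of_nat_mult)
      ultimately show ?thesis using ineq unfolding bad_def by blast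
    qed
  next
    assume A: "2*p1 + 1 = n \<and> 2*p2 < n"
    then have p1: "p1 = m" using m by simp
    show ?thesis
    proof (cases "p2 = 0")
      case True
      then have "a = 0" using assms(3) unfolding ok_def by simp
      then show ?thesis using True assms(1,4) p1 d1 unfolding bad_def cs_def by simp
    next
      case False
      then have "\<bar>2*real p2 - real n\<bar> \<le> real n - 2" using A m by (auto simp: abs_if)
      moreover have "(2*real p1 - real n)^2 = 1" using p1 m by (simp add: power2_eq_square algebra_simps)
      moreover have "p1 + p2 + 1 \<le> n + 2*a" using assms(3) A p1 m unfolding ok_def by linarith
      then have "real p1 + real p2 - 2*real a \<le> real n - 1" by (simp add: of_nat_add[symmetric] of_nat_mult[symmetric] del: of_nat_add of_nat_mult)
      ultimately show ?thesis using ineq unfolding bad_def by blast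
    qed
  qed
qed

lemma step_tuple:
  assumes "n \<ge> 2" "-1 \<le> \<epsilon>" "\<epsilon> \<le> 1" "ok n p1 p2 a" "ok n q1 p2 b"
    "\<not> bad n \<epsilon> p1 p2 a" "\<not> bad n \<epsilon> q1 p2 b" "q1 = p1 + 1 \<or> p1 = q1 + 1"
  shows "(2*p1 < n \<longleftrightarrow> 2*q1 < n) \<and> (2*p1 = n \<longleftrightarrow> 2*q1 = n)"
proof (rule ccontr)
  assume C: "\<not> ?thesis"
  have e1: "\<bar>\<epsilon>\<bar> \<le> 1" using assms(2,3) by auto
  show False
  proof (cases "even n")
    case True
    then obtain m where m: "n = 2*m" by blast
    have "2*p1 = n \<or> 2*q1 = n" using C assms(8) m by presburger
    then show False
    proof
      assume h: "2*p1 = n"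
      show False
      proof (cases "2*p2 = n")
        case False
        then show False using G_even[OF True assms(1,4) h False e1] assms(6) by simp
      next
        case True2: True
        have "2*q1 \<noteq> n" using h assms(8) by presburger
        have "bad n \<epsilon> p2 q1 b" using G_even[OF True assms(1) _ True2 \<open>2*q1 \<noteq> n\<close> e1] assms(5) ok_sym by blast
        then show False using assms(7) bad_sym by blast
      qed
    next
      assume h: "2*q1 = n"
      show False
      proof (cases "2*p2 = n")
        case False
        then show False using G_even[OF True assms(1,5) h False e1] assms(7) by simp
      next
        case True2: True
        have "2*p1 \<noteq> n" using h assms(8) by presburger
        have "bad n \<epsilon> p2 p1 a" using G_even[OF True assms(1) _ True2 \<open>2*p1 \<noteq> n\<close> e1] assms(4) ok_sym by blast
        then show False using assms(6) bad_sym by blast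
      qed
    qed
  next
    case False
    then obtain m where m: "n = 2*m+1" using oddE by blast
    have cr: "(2*p1 + 1 = n \<and> 2*q1 = n+1) \<or> (2*p1 = n+1 \<and> 2*q1 + 1 = n)" using C assms(8) m by presburger
    have p2: "2*p2 > n \<or> 2*p2 < n" using m by presburger
    show False
    proof (cases "\<epsilon> \<ge> 0")
      case True
      note G1 = G_odd_pos[OF False assms(1,4) True assms(3)] and G2 = G_odd_pos[OF False assms(1,5) True assms(3)]
      from cr show False
      proof
        assume c: "2*p1 + 1 = n \<and> 2*q1 = n+1"
        from p2 show False
        proof
          assume "2*p2 > n" then show False using G1 c assms(6) by blast
        next
          assume "2*p2 < n" then show False using G2 c assms(7) by blast
        qed
      next
        assume c: "2*p1 = n+1 \<and> 2*q1 + 1 = n"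
        from p2 show False
        proof
          assume "2*p2 > n" then show False using G2 c assms(7) by blast
        next
          assume "2*p2 < n" then show False using G1 c assms(6) by blast
        qed
      qed
    next
      case False2: False
      then have en: "\<epsilon> < 0" by simp
      note G1 = G_odd_neg[OF False assms(1,4) en assms(2)] and G2 = G_odd_neg[OF False assms(1,5) en assms(2)]
      from cr show False
      proof
        assume c: "2*p1 + 1 = n \<and> 2*q1 = n+1"
        from p2 show False
        proof
          assume "2*p2 > n" then show False using G2 c assms(7) by blast
        next
          assume "2*p2 < n" then show False using G1 c assms(6) by blast
        qed
      next
        assume c: "2*p1 = n+1 \<and> 2*q1 + 1 = n"
        from p2 show False
        proof
          assume "2*p2 > n" then show False using G1 c assms(6) by blast
        next
          assume "2*p2 < n" then show False using G2 c assms(7) by blast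
        qed
      qed
    qed
  qed
qed

lemma int_even_sq: "even (z::int) \<Longrightarrow> 2*\<bar>z\<bar> \<le> z*z"
proof -
  assume "even z"
  then have c: "\<bar>z\<bar> = 0 \<or> \<bar>z\<bar> \<ge> 2" by presburger
  from c show ?thesis
  proof
    assume "\<bar>z\<bar> = 0" then show ?thesis by simp
  next
    assume h: "\<bar>z\<bar> \<ge> 2"
    have "2*\<bar>z\<bar> \<le> \<bar>z\<bar>*\<bar>z\<bar>" by (rule mult_right_mono[OF h]) simp
    then show ?thesis by (simp only: abs_mult_self_eq)
  qed
qed

lemma int_odd_sq: "odd (z::int) \<Longrightarrow> z*z = 1 \<or> (3*\<bar>z\<bar> \<le> z*z \<and> \<bar>z\<bar> \<ge> 3)"
proof -
  assume "odd z"
  then have c: "\<bar>z\<bar> = 1 \<or> \<bar>z\<bar> \<ge> 3" by presburger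
  from c show ?thesis
  proof
    assume h: "\<bar>z\<bar> = 1"
    have "\<bar>z\<bar>*\<bar>z\<bar> = 1" using h by simp
    then have "z*z = 1" by (simp only: abs_mult_self_eq)
    then show ?thesis by (rule disjI1)
  next
    assume h: "\<bar>z\<bar> \<ge> 3"
    have "3*\<bar>z\<bar> \<le> \<bar>z\<bar>*\<bar>z\<bar>" by (rule mult_right_mono[OF h]) simp
    then have "3*\<bar>z\<bar> \<le> z*z" by (simp only: abs_mult_self_eq)
    then show ?thesis using h by simp
  qed
qed

lemma Kaux_even:
  fixes u e N :: real
  assumes "\<bar>e\<bar> \<le> 1" "2*\<bar>u\<bar> \<le> u*u"
  shows "N - (u^2 + N^2)/2 - e*u \<le> N - N^2/2"
proof -
  have "\<bar>e*u\<bar> \<le> 1*\<bar>u\<bar>" unfolding abs_mult by (rule mult_right_mono) (use assms in auto)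
  then have "-\<bar>u\<bar> \<le> e*u" by auto
  thus ?thesis using assms(2) unfolding power2_eq_square by argo
qed

lemma Kaux_odd:
  fixes u e N :: real
  assumes "\<bar>e\<bar> \<le> 1" "u*u = 1 \<or> (3*\<bar>u\<bar> \<le> u*u \<and> \<bar>u\<bar> \<ge> 3)"
  shows "N - (u^2 + N^2)/2 - e*u \<le> N - (N^2+1)/2 + \<bar>e\<bar>"
proof -
  have "\<bar>e*u\<bar> \<le> 1*\<bar>u\<bar>" unfolding abs_mult by (rule mult_right_mono) (use assms in auto)
  then have b: "-\<bar>u\<bar> \<le> e*u" by auto
  from assms(2) show ?thesis
  proof
    assume u1: "u*u = 1"
    then have "u = 1 \<or> u = -1" using power2_eq_1_iff[of u] by (simp add: power2_eq_square)
    moreover have "-e \<le> \<bar>e\<bar>" "e \<le> \<bar>e\<bar>" by auto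
    ultimately show ?thesis unfolding power2_eq_square by (elim disjE; simp; argo)
  next
    assume c: "3*\<bar>u\<bar> \<le> u*u \<and> \<bar>u\<bar> \<ge> 3"
    have "\<bar>e\<bar> \<ge> 0" by simp
    then show ?thesis using b c unfolding power2_eq_square by argo
  qed
qed

lemma K_tuple1:
  assumes "ok n p1 p2 a" "p2 = 0 \<or> p2 = n" "\<bar>\<epsilon>\<bar> \<le> 1"
  shows "En n \<epsilon> p1 p2 a \<le> Gam n \<epsilon>"
proof -
  define z where "z = 2*int p1 - int n"
  have zr: "real_of_int z = 2*real p1 - real n" unfolding z_def by simp
  have zp: "even z \<longleftrightarrow> even n" unfolding z_def by simp
  obtain u where u: "u = real_of_int z \<or> u = - real_of_int z"
     and Eu: "En n \<epsilon> p1 p2 a = real n - (u^2 + (real n)^2)/2 - \<epsilon>*u"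
  proof (cases "p2 = 0")
    case True
    then have "a = 0" using assms(1) unfolding ok_def by simp
    then have "En n \<epsilon> p1 p2 a = real n - ((-real_of_int z)^2 + (real n)^2)/2 - \<epsilon>*(-real_of_int z)"
      unfolding En_def zr using True by (simp add: algebra_simps power2_eq_square)
    then show ?thesis using that by blast
  next
    case False
    then have p2: "p2 = n" using assms(2) by simp
    then have "a = p1" using assms(1) unfolding ok_def by simp
    then have "En n \<epsilon> p1 p2 a = real n - ((real_of_int z)^2 + (real n)^2)/2 - \<epsilon>*(real_of_int z)"
      unfolding En_def zr using p2 by (simp add: algebra_simps power2_eq_square)
    then show ?thesis using that by blast
  qed
  have uu: "u*u = real_of_int (z*z)" "\<bar>u\<bar> = real_of_int \<bar>z\<bar>" using u by auto
  show ?thesis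
  proof (cases "even n")
    case True
    have "2*\<bar>z\<bar> \<le> z*z" using int_even_sq zp True by blast
    then have "real_of_int (2*\<bar>z\<bar>) \<le> real_of_int (z*z)" unfolding of_int_le_iff .
    then have "2*\<bar>u\<bar> \<le> u*u" unfolding uu by simp
    then show ?thesis unfolding Eu Gam_def using Kaux_even[OF assms(3)] True by simp
  next
    case False
    have "z*z = 1 \<or> (3*\<bar>z\<bar> \<le> z*z \<and> \<bar>z\<bar> \<ge> 3)" using int_odd_sq zp False by blast
    then have "real_of_int (z*z) = 1 \<or> (real_of_int (3*\<bar>z\<bar>) \<le> real_of_int (z*z) \<and> real_of_int \<bar>z\<bar> \<ge> 3)"
      by (simp only: of_int_le_iff of_int_eq_1_iff of_int_numeral_le_iff) 
    then have "u*u = 1 \<or> (3*\<bar>u\<bar> \<le> u*u \<and> \<bar>u\<bar> \<ge> 3)" unfolding uu by simp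
    then show ?thesis unfolding Eu Gam_def using Kaux_odd[OF assms(3)] False by simp
  qed
qed

lemma K_tuple:
  assumes "ok n p1 p2 a" "p1 = 0 \<or> p1 = n \<or> p2 = 0 \<or> p2 = n" "\<bar>\<epsilon>\<bar> \<le> 1"
  shows "En n \<epsilon> p1 p2 a \<le> Gam n \<epsilon>"
proof -
  have o2: "ok n p2 p1 a" using assms(1) ok_sym by blast
  from assms(2) consider "p1 = 0 \<or> p1 = n" | "p2 = 0 \<or> p2 = n" by blast
  then show ?thesis
  proof cases
    case 1
    have "En n \<epsilon> p2 p1 a \<le> Gam n \<epsilon>" by (rule K_tuple1[OF o2 1 assms(3)])
    then show ?thesis using En_sym by simp
  next
    case 2
    show ?thesis by (rule K_tuple1[OF assms(1) 2 assms(3)])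
  qed
qed

lemma cs_Gam:
  assumes "cs n \<epsilon> p1 p2 a"
  shows "En n \<epsilon> p1 p2 a = Gam n \<epsilon>"
proof (cases "even n")
  case True
  then obtain m where m: "n = 2*m" by blast
  have "(p1,p2,a) \<in> {(m, 0, 0), (0, m, 0), (n, m, m), (m, n, m)}" using assms True m unfolding cs_def by simp
  then show ?thesis unfolding En_def Gam_def using True m by (auto simp: power2_eq_square algebra_simps)
next
  case False
  then obtain m where m: "n = 2*m+1" using oddE by blast
  show ?thesis
  proof (cases "\<epsilon> \<ge> 0")
    case True
    have "(p1,p2,a) \<in> {(m+1, 0, 0), (0, m+1, 0), (n, m, m), (m, n, m)}" using assms True False m unfolding cs_def by simp
    then show ?thesis unfolding En_def Gam_def using True False m by (auto simp: power2_eq_square algebra_simps)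
  next
    case F2: False
    have "(p1,p2,a) \<in> {(m, 0, 0), (0, m, 0), (n, m+1, m+1), (m+1, n, m+1)}" using assms F2 False m unfolding cs_def by simp
    then show ?thesis unfolding En_def Gam_def using F2 False m by (auto simp: power2_eq_square algebra_simps)
  qed
qed




lemma fin_b1[simp]: "finite (block1 n)" unfolding block1_def by simp
lemma fin_b2[simp]: "finite (block2 n)" unfolding block2_def by simp
lemma card_b1[simp]: "card (block1 n) = n" unfolding block1_def by simp
lemma card_b2[simp]: "card (block2 n) = n" unfolding block2_def by simp
lemma verts_eq: "verts n = block1 n \<union> block2 n" unfolding verts_def block1_def block2_def by auto
lemma b12_disj: "i \<in> block1 n \<Longrightarrow> i \<notin> block2 n" unfolding block1_def block2_def by auto
lemma b1_shift: "i \<in> block1 n \<Longrightarrow> i + n \<in> block2 n" unfolding block1_def block2_def by auto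

lemma ok_cfg:
  assumes "\<sigma> \<in> configs n"
  shows "ok n (P1 n \<sigma>) (P2 n \<sigma>) (AA n \<sigma>)"
proof -
  let ?A = "{i \<in> block1 n. \<sigma> i = 1}" and ?B = "{i \<in> block1 n. \<sigma> (i+n) = 1}"
  have p1: "P1 n \<sigma> \<le> n" unfolding P1_def using card_mono[of "block1 n" ?A] by simp
  have p2: "P2 n \<sigma> \<le> n" unfolding P2_def using card_mono[of "block2 n" "{i \<in> block2 n. \<sigma> i = 1}"] by simp
  have int: "?A \<inter> ?B = {i \<in> block1 n. \<sigma> i = 1 \<and> \<sigma> (i+n) = 1}" by auto
  have a1: "AA n \<sigma> \<le> P1 n \<sigma>" unfolding AA_def P1_def by (rule card_mono) auto
  have a2: "AA n \<sigma> \<le> P2 n \<sigma>" unfolding AA_def P2_shift[symmetric] by (rule card_mono) auto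
  have "card (?A \<union> ?B) + card (?A \<inter> ?B) = card ?A + card ?B" using card_Un_Int[of ?A ?B] by simp
  moreover have "card (?A \<union> ?B) \<le> n" using card_mono[of "block1 n" "?A \<union> ?B"] by auto
  ultimately have "P1 n \<sigma> + P2 n \<sigma> \<le> n + AA n \<sigma>" unfolding P1_def AA_def P2_shift[symmetric] int by simp
  then show ?thesis unfolding ok_def using p1 p2 a1 a2 by simp
qed

lemma Ccl_alt: "Ccl n x y z = {\<sigma> \<in> configs n. P1 n \<sigma> = x \<and> P2 n \<sigma> = y \<and> AA n \<sigma> = z}"
  unfolding Ccl_def P1_def P2_def AA_def by simp

lemma Ccl_mem: "\<sigma> \<in> Ccl n x y z \<longleftrightarrow> \<sigma> \<in> configs n \<and> (P1 n \<sigma>, P2 n \<sigma>, AA n \<sigma>) = (x,y,z)"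
  unfolding Ccl_alt by simp

lemma Cstar_iff: "\<sigma> \<in> Cstar n \<epsilon> \<longleftrightarrow> \<sigma> \<in> configs n \<and> cs n \<epsilon> (P1 n \<sigma>) (P2 n \<sigma>) (AA n \<sigma>)"
proof -
  consider "even n" | "odd n \<and> \<epsilon> \<ge> 0" | "odd n \<and> \<not> \<epsilon> \<ge> 0" by blast
  then show ?thesis
  proof cases
    case 1
    then show ?thesis unfolding Cstar_def cs_def if_P[OF 1]
      by (simp only: Un_iff Ccl_mem insert_iff empty_iff) blast
  next
    case 2
    then have ne: "\<not> even n" and e: "\<epsilon> \<ge> 0" by auto
    show ?thesis unfolding Cstar_def cs_def if_not_P[OF ne] if_P[OF e]
      by (simp only: Un_iff Ccl_mem insert_iff empty_iff) blast
  next
    case 3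
    then have ne: "\<not> even n" and e: "\<not> \<epsilon> \<ge> 0" by auto
    show ?thesis unfolding Cstar_def cs_def if_not_P[OF ne] if_not_P[OF e]
      by (simp only: Un_iff Ccl_mem insert_iff empty_iff) blast
  qed
qed

lemma bad_cfg:
  assumes "\<sigma> \<in> configs n"
  shows "bad n \<epsilon> (P1 n \<sigma>) (P2 n \<sigma>) (AA n \<sigma>) \<longleftrightarrow> Ham n \<epsilon> 0 \<sigma> > Gam n \<epsilon> \<or> \<sigma> \<in> Cstar n \<epsilon>"
  unfolding bad_def Ham_eq[OF assms] Cstar_iff using assms by simp

lemma card_flip:
  assumes "finite B" "v \<in> B" "\<forall>i\<in>B. i \<noteq> v \<longrightarrow> \<sigma> i = \<tau> i" "\<sigma> v \<noteq> \<tau> v" "\<sigma> v = 1 \<or> \<tau> v = 1"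
  shows "card {i\<in>B. \<tau> i = 1} = card {i\<in>B. \<sigma> i = 1} + 1 \<or> card {i\<in>B. \<sigma> i = 1} = card {i\<in>B. \<tau> i = 1} + 1"
proof (cases "\<sigma> v = 1")
  case True
  then have "{i\<in>B. \<sigma> i = 1} = insert v {i\<in>B. \<tau> i = 1}" "v \<notin> {i\<in>B. \<tau> i = 1}"
    using assms by auto
  then show ?thesis using assms(1) by simp
next
  case False
  then have "{i\<in>B. \<tau> i = 1} = insert v {i\<in>B. \<sigma> i = 1}" "v \<notin> {i\<in>B. \<sigma> i = 1}"
    using assms by auto
  then show ?thesis using assms(1) by simp
qed

lemma card_same:
  assumes "\<forall>i\<in>B. \<sigma> i = \<tau> i"
  shows "card {i\<in>B. \<tau> i = 1} = card {i\<in>B. \<sigma> i = 1}"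
proof -
  have "{i\<in>B. \<tau> i = 1} = {i\<in>B. \<sigma> i = 1}" using assms by auto
  then show ?thesis by simp
qed

lemma neighbours_P:
  assumes "neighbours n \<sigma> \<tau>"
  shows "(P2 n \<tau> = P2 n \<sigma> \<and> (P1 n \<tau> = P1 n \<sigma> + 1 \<or> P1 n \<sigma> = P1 n \<tau> + 1)) \<or>
         (P1 n \<tau> = P1 n \<sigma> \<and> (P2 n \<tau> = P2 n \<sigma> + 1 \<or> P2 n \<sigma> = P2 n \<tau> + 1))"
proof -
  have c: "\<sigma> \<in> configs n" "\<tau> \<in> configs n" and "card {i \<in> verts n. \<sigma> i \<noteq> \<tau> i} = 1"
    using assms unfolding neighbours_def by auto
  then obtain v where v: "{i \<in> verts n. \<sigma> i \<noteq> \<tau> i} = {v}" by (metis One_nat_def card_1_singletonE)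
  then have vv: "v \<in> verts n" "\<sigma> v \<noteq> \<tau> v" by blast+
  have agree: "\<forall>i\<in>verts n. i \<noteq> v \<longrightarrow> \<sigma> i = \<tau> i" using v by blast
  have one: "\<sigma> v = 1 \<or> \<tau> v = 1"
  proof (rule ccontr)
    assume "\<not> (\<sigma> v = 1 \<or> \<tau> v = 1)"
    then have "\<sigma> v = -1" "\<tau> v = -1" using cfg_val[OF c(1) vv(1)] cfg_val[OF c(2) vv(1)] by simp_all
    then show False using vv(2) by simp
  qed
  have ag1: "\<forall>i\<in>block1 n. i \<noteq> v \<longrightarrow> \<sigma> i = \<tau> i" using agree unfolding verts_eq by blast
  have ag2: "\<forall>i\<in>block2 n. i \<noteq> v \<longrightarrow> \<sigma> i = \<tau> i" using agree unfolding verts_eq by blast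
  show ?thesis
  proof (cases "v \<in> block1 n")
    case True
    have "\<forall>i\<in>block2 n. \<sigma> i = \<tau> i" using ag2 b12_disj[OF True] by metis
    then have "P2 n \<tau> = P2 n \<sigma>" unfolding P2_def by (rule card_same)
    moreover have "P1 n \<tau> = P1 n \<sigma> + 1 \<or> P1 n \<sigma> = P1 n \<tau> + 1" unfolding P1_def
      by (rule card_flip[OF fin_b1 True ag1 vv(2) one])
    ultimately show ?thesis by blast
  next
    case False
    then have T: "v \<in> block2 n" using vv(1) unfolding verts_eq by blast
    have "\<forall>i\<in>block1 n. \<sigma> i = \<tau> i" using ag1 False by metis
    then have "P1 n \<tau> = P1 n \<sigma>" unfolding P1_def by (rule card_same)
    moreover have "P2 n \<tau> = P2 n \<sigma> + 1 \<or> P2 n \<sigma> = P2 n \<tau> + 1" unfolding P2_def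
      by (rule card_flip[OF fin_b2 T ag2 vv(2) one])
    ultimately show ?thesis by blast
  qed
qed

definition Qc :: "nat \<Rightarrow> (nat \<Rightarrow> int) \<Rightarrow> bool \<times> bool \<times> bool \<times> bool" where
  "Qc n \<sigma> = (2*P1 n \<sigma> < n, 2*P1 n \<sigma> = n, 2*P2 n \<sigma> < n, 2*P2 n \<sigma> = n)"

lemma Qc_step:
  assumes "n \<ge> 2" "-1 \<le> \<epsilon>" "\<epsilon> \<le> 1" "neighbours n \<sigma> \<tau>"
    "\<not> bad n \<epsilon> (P1 n \<sigma>) (P2 n \<sigma>) (AA n \<sigma>)" "\<not> bad n \<epsilon> (P1 n \<tau>) (P2 n \<tau>) (AA n \<tau>)"
  shows "Qc n \<sigma> = Qc n \<tau>"
proof -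
  have c: "\<sigma> \<in> configs n" "\<tau> \<in> configs n" using assms(4) unfolding neighbours_def by auto
  note o1 = ok_cfg[OF c(1)] and o2 = ok_cfg[OF c(2)]
  from neighbours_P[OF assms(4)] show ?thesis
  proof
    assume h: "P2 n \<tau> = P2 n \<sigma> \<and> (P1 n \<tau> = P1 n \<sigma> + 1 \<or> P1 n \<sigma> = P1 n \<tau> + 1)"
    have o2': "ok n (P1 n \<tau>) (P2 n \<sigma>) (AA n \<tau>)" using o2 h by simp
    have b2': "\<not> bad n \<epsilon> (P1 n \<tau>) (P2 n \<sigma>) (AA n \<tau>)" using assms(6) h by simp
    have "(2*P1 n \<sigma> < n \<longleftrightarrow> 2*P1 n \<tau> < n) \<and> (2*P1 n \<sigma> = n \<longleftrightarrow> 2*P1 n \<tau> = n)"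
      by (rule step_tuple[OF assms(1,2,3) o1 o2' assms(5) b2']) (use h in blast)
    then show ?thesis unfolding Qc_def using h by simp
  next
    assume h: "P1 n \<tau> = P1 n \<sigma> \<and> (P2 n \<tau> = P2 n \<sigma> + 1 \<or> P2 n \<sigma> = P2 n \<tau> + 1)"
    have o1': "ok n (P2 n \<sigma>) (P1 n \<sigma>) (AA n \<sigma>)" using o1 ok_sym by blast
    have o2': "ok n (P2 n \<tau>) (P1 n \<sigma>) (AA n \<tau>)" using o2 h ok_sym by simp
    have b1': "\<not> bad n \<epsilon> (P2 n \<sigma>) (P1 n \<sigma>) (AA n \<sigma>)" using assms(5) bad_sym by blast
    have b2': "\<not> bad n \<epsilon> (P2 n \<tau>) (P1 n \<sigma>) (AA n \<tau>)" using assms(6) h bad_sym by simp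
    have "(2*P2 n \<sigma> < n \<longleftrightarrow> 2*P2 n \<tau> < n) \<and> (2*P2 n \<sigma> = n \<longleftrightarrow> 2*P2 n \<tau> = n)"
      by (rule step_tuple[OF assms(1,2,3) o1' o2' b1' b2']) (use h in blast)
    then show ?thesis unfolding Qc_def using h by simp
  qed
qed




lemma path_Qc:
  assumes "n \<ge> 2" "-1 \<le> \<epsilon>" "\<epsilon> \<le> 1" "is_path n s1 s2 \<omega>"
    "\<forall>\<zeta>\<in>set \<omega>. \<not> bad n \<epsilon> (P1 n \<zeta>) (P2 n \<zeta>) (AA n \<zeta>)"
  shows "Qc n s2 = Qc n s1"
proof -
  have ne: "\<omega> \<noteq> []" and hd: "hd \<omega> = s1" and lst: "last \<omega> = s2"
    and nb: "\<forall>k. Suc k < length \<omega> \<longrightarrow> neighbours n (\<omega> ! k) (\<omega> ! Suc k)"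
    using assms(4) unfolding is_path_def by auto
  have "\<forall>k. k < length \<omega> \<longrightarrow> Qc n (\<omega> ! k) = Qc n (\<omega> ! 0)"
  proof
    fix k show "k < length \<omega> \<longrightarrow> Qc n (\<omega> ! k) = Qc n (\<omega> ! 0)"
    proof (induction k)
      case 0 then show ?case by simp
    next
      case (Suc k)
      show ?case
      proof
        assume k: "Suc k < length \<omega>"
        then have "neighbours n (\<omega> ! k) (\<omega> ! Suc k)" using nb by blast
        moreover have "\<omega> ! k \<in> set \<omega>" "\<omega> ! Suc k \<in> set \<omega>" using k by auto
        ultimately have "Qc n (\<omega> ! k) = Qc n (\<omega> ! Suc k)"
          using Qc_step[OF assms(1,2,3)] assms(5) by blast
        then show "Qc n (\<omega> ! Suc k) = Qc n (\<omega> ! 0)" using Suc k by simp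
      qed
    qed
  qed
  moreover have "last \<omega> = \<omega> ! (length \<omega> - 1)" using ne by (simp add: last_conv_nth)
  moreover have "hd \<omega> = \<omega> ! 0" using ne by (simp add: hd_conv_nth)
  moreover have "length \<omega> - 1 < length \<omega>" using ne by simp
  ultimately show ?thesis using hd lst by metis
qed

definition kap :: "nat \<Rightarrow> int \<Rightarrow> int \<Rightarrow> nat \<Rightarrow> int" where
  "kap n c1 c2 = (\<lambda>i. if i \<in> block1 n then c1 else if i \<in> block2 n then c2 else 0)"

lemma kap_cfg: "c1 = 1 \<or> c1 = -1 \<Longrightarrow> c2 = 1 \<or> c2 = -1 \<Longrightarrow> kap n c1 c2 \<in> configs n"
  unfolding configs_def kap_def verts_eq by auto

lemma P1_kap1: "P1 n (kap n 1 c) = n"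
proof -
  have "{i \<in> block1 n. kap n 1 c i = 1} = block1 n" unfolding kap_def by auto
  then show ?thesis unfolding P1_def by simp
qed

lemma P2_kap1: "P2 n (kap n c 1) = n"
proof -
  have "{i \<in> block2 n. kap n c 1 i = 1} = block2 n" unfolding kap_def using b12_disj by auto
  then show ?thesis unfolding P2_def by simp
qed

lemma P2_kapm: "P2 n (kap n c (-1)) = 0"
proof -
  have "{i \<in> block2 n. kap n c (-1) i = 1} = {}" unfolding kap_def using b12_disj by auto
  then show ?thesis unfolding P2_def by simp
qed

lemma AA_kap11: "AA n (kap n 1 1) = n"
proof -
  have "{i \<in> block1 n. kap n 1 1 i = 1 \<and> kap n 1 1 (i+n) = 1} = block1 n"
    unfolding kap_def using b12_disj b1_shift by auto
  then show ?thesis unfolding AA_def by simp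
qed

lemma AA_kap1m: "AA n (kap n 1 (-1)) = 0"
proof -
  have "{i \<in> block1 n. kap n 1 (-1) i = 1 \<and> kap n 1 (-1) (i+n) = 1} = {}"
    unfolding kap_def block1_def block2_def by auto
  then show ?thesis unfolding AA_def by simp
qed

lemma En_lower:
  assumes "ok n p1 p2 a" "0 < p1" "p1 < n" "\<bar>\<epsilon>\<bar> \<le> 1"
  shows "En n \<epsilon> p1 p2 a > real n - (real n)^2 - \<bar>\<epsilon>\<bar>*real n"
proof -
  have "\<bar>2*real p1 - real n\<bar> \<le> real n - 2" using assms(2,3) by (auto simp: abs_if)
  then have s1: "(2*real p1 - real n)^2 \<le> (real n)^2 - 4*real n + 4" by (rule sq_le)
  have "\<bar>2*real p2 - real n\<bar> \<le> \<bar>real n\<bar>" using assms(1) unfolding ok_def by (auto simp: abs_if)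
  then have s2: "(2*real p2 - real n)^2 \<le> (real n)^2" using abs_le_square_iff by blast
  let ?X = "real n - 2*(real p1 + real p2 - 2*real a)"
  have xb: "\<bar>?X\<bar> \<le> real n" using X_bounds[OF assms(1)] by (simp add: abs_le_iff)
  have "\<bar>\<epsilon> * ?X\<bar> \<le> \<bar>\<epsilon>\<bar> * real n" unfolding abs_mult by (rule mult_left_mono[OF xb]) simp
  then have ex: "\<epsilon> * ?X \<le> \<bar>\<epsilon>\<bar> * real n" by (simp add: abs_le_iff)
  have n1: "real n \<ge> 2" using assms(2,3) by simp
  show ?thesis unfolding En_def using s1 s2 ex n1 by argo
qed

lemma stable_P:
  assumes "s \<in> stable_states n \<epsilon> 0" "\<bar>\<epsilon>\<bar> \<le> 1" "n \<ge> 2"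
  shows "(P1 n s = 0 \<or> P1 n s = n) \<and> (P2 n s = 0 \<or> P2 n s = n)"
proof -
  have s: "s \<in> configs n" and m: "\<forall>\<tau>\<in>configs n. Ham n \<epsilon> 0 s \<le> Ham n \<epsilon> 0 \<tau>"
    using assms(1) unfolding stable_states_def by auto
  have k1: "kap n 1 1 \<in> configs n" "kap n 1 (-1) \<in> configs n" using kap_cfg by auto
  have h1: "Ham n \<epsilon> 0 (kap n 1 1) = real n - (real n)^2 - \<epsilon>*real n"
    unfolding Ham_eq[OF k1(1)] P1_kap1 P2_kap1 AA_kap11 En_def by (simp add: power2_eq_square algebra_simps)
  have h2: "Ham n \<epsilon> 0 (kap n 1 (-1)) = real n - (real n)^2 + \<epsilon>*real n"
    unfolding Ham_eq[OF k1(2)] P1_kap1 P2_kapm AA_kap1m En_def by (simp add: power2_eq_square algebra_simps)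
  have "En n \<epsilon> (P1 n s) (P2 n s) (AA n s) \<le> real n - (real n)^2 - \<bar>\<epsilon>\<bar>*real n"
    using m k1 h1 h2 unfolding Ham_eq[OF s] by (cases "\<epsilon> \<ge> 0") auto
  moreover note o = ok_cfg[OF s]
  have o': "ok n (P2 n s) (P1 n s) (AA n s)" using o ok_sym by blast
  have p1: "P1 n s \<le> n" "P2 n s \<le> n" using o unfolding ok_def by auto
  show ?thesis
  proof (rule ccontr)
    assume "\<not> ?thesis"
    then have "(0 < P1 n s \<and> P1 n s < n) \<or> (0 < P2 n s \<and> P2 n s < n)" using p1 by auto
    then show False
    proof
      assume "0 < P1 n s \<and> P1 n s < n"
      then show False using En_lower[OF o _ _ assms(2)] calculation by fastforce
    next
      assume "0 < P2 n s \<and> P2 n s < n"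
      then show False using En_lower[OF o' _ _ assms(2)] calculation En_sym by fastforce
    qed
  qed
qed

lemma P1_full: "\<sigma> \<in> configs n \<Longrightarrow> P1 n \<sigma> = n \<Longrightarrow> i \<in> block1 n \<Longrightarrow> \<sigma> i = 1"
  unfolding P1_def using card_subset_eq[of "block1 n" "{i \<in> block1 n. \<sigma> i = 1}"] by auto
lemma P2_full: "\<sigma> \<in> configs n \<Longrightarrow> P2 n \<sigma> = n \<Longrightarrow> i \<in> block2 n \<Longrightarrow> \<sigma> i = 1"
  unfolding P2_def using card_subset_eq[of "block2 n" "{i \<in> block2 n. \<sigma> i = 1}"] by auto
lemma P1_empty: "\<sigma> \<in> configs n \<Longrightarrow> P1 n \<sigma> = 0 \<Longrightarrow> i \<in> block1 n \<Longrightarrow> \<sigma> i = -1"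
  unfolding P1_def using cfg_val[of \<sigma> n i] by (auto simp: verts_eq)
lemma P2_empty: "\<sigma> \<in> configs n \<Longrightarrow> P2 n \<sigma> = 0 \<Longrightarrow> i \<in> block2 n \<Longrightarrow> \<sigma> i = -1"
  unfolding P2_def using cfg_val[of \<sigma> n i] by (auto simp: verts_eq)

lemma block_val:
  assumes "\<sigma> \<in> configs n" "\<tau> \<in> configs n" "P1 n \<sigma> = 0 \<or> P1 n \<sigma> = n" "P1 n \<tau> = P1 n \<sigma>" "i \<in> block1 n"
  shows "\<sigma> i = \<tau> i"
proof (cases "P1 n \<sigma> = 0")
  case True
  then have "P1 n \<tau> = 0" using assms(4) by simp
  then show ?thesis using P1_empty[OF assms(1) True assms(5)] P1_empty[OF assms(2) _ assms(5)] by simp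
next
  case False
  then have a: "P1 n \<sigma> = n" using assms(3) by simp
  then have "P1 n \<tau> = n" using assms(4) by simp
  then show ?thesis using P1_full[OF assms(1) a assms(5)] P1_full[OF assms(2) _ assms(5)] by simp
qed

lemma block_val2:
  assumes "\<sigma> \<in> configs n" "\<tau> \<in> configs n" "P2 n \<sigma> = 0 \<or> P2 n \<sigma> = n" "P2 n \<tau> = P2 n \<sigma>" "i \<in> block2 n"
  shows "\<sigma> i = \<tau> i"
proof (cases "P2 n \<sigma> = 0")
  case True
  then have "P2 n \<tau> = 0" using assms(4) by simp
  then show ?thesis using P2_empty[OF assms(1) True assms(5)] P2_empty[OF assms(2) _ assms(5)] by simp
next
  case False
  then have a: "P2 n \<sigma> = n" using assms(3) by simp
  then have "P2 n \<tau> = n" using assms(4) by simp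
  then show ?thesis using P2_full[OF assms(1) a assms(5)] P2_full[OF assms(2) _ assms(5)] by simp
qed

lemma cfg_eq:
  assumes "\<sigma> \<in> configs n" "\<tau> \<in> configs n" "P1 n \<sigma> = 0 \<or> P1 n \<sigma> = n" "P1 n \<tau> = P1 n \<sigma>"
    "P2 n \<sigma> = 0 \<or> P2 n \<sigma> = n" "P2 n \<tau> = P2 n \<sigma>"
  shows "\<sigma> = \<tau>"
proof
  fix i
  show "\<sigma> i = \<tau> i"
  proof (cases "i \<in> verts n")
    case True
    then show ?thesis using block_val[OF assms(1-4)] block_val2[OF assms(1,2,5,6)] unfolding verts_eq by blast
  next
    case False
    then show ?thesis using assms(1,2) unfolding configs_def by auto
  qed
qed

lemma gate_core:
  assumes "n \<ge> 2" "-1 \<le> \<epsilon>" "\<epsilon> \<le> 1"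
    "s1 \<in> stable_states n \<epsilon> 0" "s2 \<in> stable_states n \<epsilon> 0" "s1 \<noteq> s2" "is_path n s1 s2 \<omega>"
  shows "\<exists>\<zeta>\<in>set \<omega>. Ham n \<epsilon> 0 \<zeta> > Gam n \<epsilon> \<or> \<zeta> \<in> Cstar n \<epsilon>"
proof (rule ccontr)
  assume C: "\<not> ?thesis"
  have sub: "set \<omega> \<subseteq> configs n" using assms(7) unfolding is_path_def by auto
  have "\<forall>\<zeta>\<in>set \<omega>. \<not> bad n \<epsilon> (P1 n \<zeta>) (P2 n \<zeta>) (AA n \<zeta>)"
  proof
    fix \<zeta> assume z: "\<zeta> \<in> set \<omega>"
    then have "\<zeta> \<in> configs n" using sub by blast
    moreover have "\<not> (Ham n \<epsilon> 0 \<zeta> > Gam n \<epsilon> \<or> \<zeta> \<in> Cstar n \<epsilon>)" using C z by blast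
    ultimately show "\<not> bad n \<epsilon> (P1 n \<zeta>) (P2 n \<zeta>) (AA n \<zeta>)" using bad_cfg by simp
  qed
  from path_Qc[OF assms(1,2,3,7) this] have Q: "Qc n s2 = Qc n s1" .
  have e1: "\<bar>\<epsilon>\<bar> \<le> 1" using assms(2,3) by auto
  have c1: "s1 \<in> configs n" and c2: "s2 \<in> configs n" using assms(4,5) unfolding stable_states_def by auto
  note st1 = stable_P[OF assms(4) e1 assms(1)] and st2 = stable_P[OF assms(5) e1 assms(1)]
  have q1: "(2*P1 n s2 < n) = (2*P1 n s1 < n)" and q2: "(2*P2 n s2 < n) = (2*P2 n s1 < n)"
    using Q unfolding Qc_def by simp_all
  have "P1 n s2 = P1 n s1" using q1 st1 st2 assms(1) by (elim conjE disjE) simp_all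
  moreover have "P2 n s2 = P2 n s1" using q2 st1 st2 assms(1) by (elim conjE disjE) simp_all
  ultimately have "s1 = s2" using cfg_eq[OF c1 c2] st1 by blast
  then show False using assms(6) by simp
qed




inductive rch :: "nat \<Rightarrow> (nat \<Rightarrow> int) set \<Rightarrow> (nat \<Rightarrow> int) \<Rightarrow> (nat \<Rightarrow> int) \<Rightarrow> bool" for n S where
  rrefl: "\<sigma> \<in> S \<Longrightarrow> rch n S \<sigma> \<sigma>"
| rstep: "neighbours n \<sigma> \<sigma>' \<Longrightarrow> \<sigma> \<in> S \<Longrightarrow> rch n S \<sigma>' \<tau> \<Longrightarrow> rch n S \<sigma> \<tau>"

lemma rch_mem: "rch n S \<sigma> \<tau> \<Longrightarrow> \<sigma> \<in> S \<and> \<tau> \<in> S"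
  by (induction rule: rch.induct) auto

lemma rch_trans: "rch n S \<sigma> \<tau> \<Longrightarrow> rch n S \<tau> \<rho> \<Longrightarrow> rch n S \<sigma> \<rho>"
  by (induction rule: rch.induct) (auto intro: rch.rstep)

lemma rch_snoc: "rch n S \<sigma> \<tau> \<Longrightarrow> neighbours n \<tau> \<tau>' \<Longrightarrow> \<tau>' \<in> S \<Longrightarrow> rch n S \<sigma> \<tau>'"
proof (induction rule: rch.induct)
  case (rrefl \<sigma>)
  then show ?case by (intro rch.rstep[of n \<sigma> \<tau>'] rch.rrefl)
next
  case (rstep \<sigma> \<sigma>' \<tau>)
  then show ?case by (intro rch.rstep[of n \<sigma> \<sigma>']) auto
qed

lemma neighbours_sym: "neighbours n \<sigma> \<tau> \<Longrightarrow> neighbours n \<tau> \<sigma>"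
proof -
  assume a: "neighbours n \<sigma> \<tau>"
  have "{i \<in> verts n. \<tau> i \<noteq> \<sigma> i} = {i \<in> verts n. \<sigma> i \<noteq> \<tau> i}" by auto
  then show ?thesis using a unfolding neighbours_def by simp
qed

lemma rch_sym: "rch n S \<sigma> \<tau> \<Longrightarrow> rch n S \<tau> \<sigma>"
proof (induction rule: rch.induct)
  case (rrefl \<sigma>)
  then show ?case by (rule rch.rrefl)
next
  case (rstep \<sigma> \<sigma>' \<tau>)
  then show ?case using rch_snoc neighbours_sym by blast
qed

lemma rch_mono: "rch n S \<sigma> \<tau> \<Longrightarrow> S \<subseteq> T \<Longrightarrow> rch n T \<sigma> \<tau>"
  by (induction rule: rch.induct) (auto intro: rch.intros)

lemma is_path_Cons:
  assumes "is_path n \<sigma>' \<rho> \<omega>" "neighbours n \<sigma> \<sigma>'"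
  shows "is_path n \<sigma> \<rho> (\<sigma> # \<omega>)"
proof -
  have ne: "\<omega> \<noteq> []" and h: "hd \<omega> = \<sigma>'" and l: "last \<omega> = \<rho>" and s: "set \<omega> \<subseteq> configs n"
    and nb: "\<forall>k. Suc k < length \<omega> \<longrightarrow> neighbours n (\<omega> ! k) (\<omega> ! Suc k)"
    using assms(1) unfolding is_path_def by auto
  have c: "\<sigma> \<in> configs n" using assms(2) unfolding neighbours_def by auto
  have "\<forall>k. Suc k < length (\<sigma> # \<omega>) \<longrightarrow> neighbours n ((\<sigma> # \<omega>) ! k) ((\<sigma> # \<omega>) ! Suc k)"
  proof (intro allI impI)
    fix k assume k: "Suc k < length (\<sigma> # \<omega>)"
    show "neighbours n ((\<sigma> # \<omega>) ! k) ((\<sigma> # \<omega>) ! Suc k)"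
    proof (cases k)
      case 0
      then show ?thesis using assms(2) h ne by (simp add: hd_conv_nth)
    next
      case (Suc j)
      then show ?thesis using nb k by simp
    qed
  qed
  then show ?thesis unfolding is_path_def using ne l s c by simp
qed

lemma rch_path:
  assumes "rch n S \<sigma> \<tau>" "S \<subseteq> configs n"
  shows "is_path n \<tau> \<rho> \<omega>2 \<Longrightarrow> \<exists>\<omega>. is_path n \<sigma> \<rho> \<omega> \<and> set \<omega> \<subseteq> S \<union> set \<omega>2 \<and> set \<omega>2 \<subseteq> set \<omega>"
  using assms(1)
proof (induction rule: rch.induct)
  case (rrefl \<sigma>)
  then show ?case by blast
next
  case (rstep \<sigma> \<sigma>' \<tau>)
  then obtain \<omega> where w: "is_path n \<sigma>' \<rho> \<omega>" "set \<omega> \<subseteq> S \<union> set \<omega>2" "set \<omega>2 \<subseteq> set \<omega>" by blast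
  have "is_path n \<sigma> \<rho> (\<sigma> # \<omega>)" by (rule is_path_Cons[OF w(1) rstep(1)])
  moreover have "set (\<sigma> # \<omega>) \<subseteq> S \<union> set \<omega>2" using w(2) rstep(2) by auto
  moreover have "set \<omega>2 \<subseteq> set (\<sigma> # \<omega>)" using w(3) by auto
  ultimately show ?case by blast
qed

definition fill :: "(nat \<Rightarrow> int) \<Rightarrow> nat set \<Rightarrow> int \<Rightarrow> nat \<Rightarrow> int" where
  "fill \<sigma> B c = (\<lambda>i. if i \<in> B then c else \<sigma> i)"

lemma rch_fill_aux:
  assumes "B \<subseteq> verts n" "c = 1 \<or> c = -1"
  shows "\<forall>\<sigma>. \<sigma> \<in> configs n \<longrightarrow> (\<forall>i. i \<notin> B \<longrightarrow> \<sigma> i = \<sigma>0 i) \<longrightarrow> card {i\<in>B. \<sigma> i \<noteq> c} = k \<longrightarrow>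
      rch n {\<tau> \<in> configs n. \<forall>i. i \<notin> B \<longrightarrow> \<tau> i = \<sigma>0 i} \<sigma> (fill \<sigma> B c)"
proof (induction k)
  have fB: "finite B" using assms(1) finite_subset unfolding verts_def by blast
  case 0
  show ?case
  proof (intro allI impI)
    fix \<sigma> assume s: "\<sigma> \<in> configs n" "\<forall>i. i \<notin> B \<longrightarrow> \<sigma> i = \<sigma>0 i" "card {i\<in>B. \<sigma> i \<noteq> c} = 0"
    then have "{i\<in>B. \<sigma> i \<noteq> c} = {}" using fB by simp
    then have "fill \<sigma> B c = \<sigma>" unfolding fill_def by (auto simp: fun_eq_iff)
    then show "rch n {\<tau> \<in> configs n. \<forall>i. i \<notin> B \<longrightarrow> \<tau> i = \<sigma>0 i} \<sigma> (fill \<sigma> B c)"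
      using s by (auto intro: rch.rrefl)
  qed
next
  have fB: "finite B" using assms(1) finite_subset unfolding verts_def by blast
  case (Suc k)
  show ?case
  proof (intro allI impI)
    fix \<sigma> assume s: "\<sigma> \<in> configs n" "\<forall>i. i \<notin> B \<longrightarrow> \<sigma> i = \<sigma>0 i" "card {i\<in>B. \<sigma> i \<noteq> c} = Suc k"
    then obtain v where v: "v \<in> {i\<in>B. \<sigma> i \<noteq> c}" by (metis card.empty ex_in_conv nat.distinct(1))
    define \<sigma>' where "\<sigma>' = \<sigma>(v := c)"
    have vB: "v \<in> B" "\<sigma> v \<noteq> c" using v by auto
    have vV: "v \<in> verts n" using vB assms(1) by blast
    have c': "\<sigma>' \<in> configs n" using s(1) vV assms(2) unfolding configs_def \<sigma>'_def by auto
    have d: "{i \<in> verts n. \<sigma> i \<noteq> \<sigma>' i} = {v}" using vV vB unfolding \<sigma>'_def by auto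
    have nb: "neighbours n \<sigma> \<sigma>'" unfolding neighbours_def using s(1) c' d by simp
    have "{i\<in>B. \<sigma>' i \<noteq> c} = {i\<in>B. \<sigma> i \<noteq> c} - {v}" unfolding \<sigma>'_def by auto
    then have k: "card {i\<in>B. \<sigma>' i \<noteq> c} = k" using s(3) v fB by simp
    have ag: "\<forall>i. i \<notin> B \<longrightarrow> \<sigma>' i = \<sigma>0 i" using s(2) vB unfolding \<sigma>'_def by auto
    have f: "fill \<sigma>' B c = fill \<sigma> B c" unfolding fill_def \<sigma>'_def using vB by (auto simp: fun_eq_iff)
    have "rch n {\<tau> \<in> configs n. \<forall>i. i \<notin> B \<longrightarrow> \<tau> i = \<sigma>0 i} \<sigma>' (fill \<sigma>' B c)"
      using Suc.IH c' ag k by blast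
    then have r: "rch n {\<tau> \<in> configs n. \<forall>i. i \<notin> B \<longrightarrow> \<tau> i = \<sigma>0 i} \<sigma>' (fill \<sigma> B c)" unfolding f .
    have m: "\<sigma> \<in> {\<tau> \<in> configs n. \<forall>i. i \<notin> B \<longrightarrow> \<tau> i = \<sigma>0 i}" using s(1,2) by blast
    show "rch n {\<tau> \<in> configs n. \<forall>i. i \<notin> B \<longrightarrow> \<tau> i = \<sigma>0 i} \<sigma> (fill \<sigma> B c)"
      by (rule rch.rstep[OF nb m r])
  qed
qed

lemma rch_fill:
  assumes "B \<subseteq> verts n" "c = 1 \<or> c = -1" "\<sigma> \<in> configs n"
  shows "rch n {\<tau> \<in> configs n. \<forall>i. i \<notin> B \<longrightarrow> \<tau> i = \<sigma> i} \<sigma> (fill \<sigma> B c)"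
  using rch_fill_aux[OF assms(1,2), of \<sigma> "card {i\<in>B. \<sigma> i \<noteq> c}"] assms(3) by blast

lemma fill_cfg: "B \<subseteq> verts n \<Longrightarrow> c = 1 \<or> c = -1 \<Longrightarrow> \<sigma> \<in> configs n \<Longrightarrow> fill \<sigma> B c \<in> configs n"
  unfolding configs_def fill_def by auto

definition Kset :: "nat \<Rightarrow> (nat \<Rightarrow> int) set" where
  "Kset n = {\<sigma> \<in> configs n. (\<exists>c. \<forall>i\<in>block1 n. \<sigma> i = c) \<or> (\<exists>c. \<forall>i\<in>block2 n. \<sigma> i = c)}"

lemma b1_verts: "block1 n \<subseteq> verts n" and b2_verts: "block2 n \<subseteq> verts n" unfolding verts_eq by auto

lemma fill_fill_kap:
  assumes "\<sigma> \<in> configs n"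
  shows "fill (fill \<sigma> (block2 n) 1) (block1 n) 1 = kap n 1 1" "fill (fill \<sigma> (block1 n) 1) (block2 n) 1 = kap n 1 1"
  using assms unfolding fill_def kap_def configs_def verts_eq by (auto simp: fun_eq_iff)

lemma b21_disj: "i \<in> block2 n \<Longrightarrow> i \<notin> block1 n" using b12_disj by blast

lemma sub_K1:
  assumes "\<forall>i\<in>block1 n. \<sigma> i = c"
  shows "{\<tau> \<in> configs n. \<forall>i. i \<notin> block2 n \<longrightarrow> \<tau> i = \<sigma> i} \<subseteq> Kset n"
proof
  fix \<tau> assume t: "\<tau> \<in> {\<tau> \<in> configs n. \<forall>i. i \<notin> block2 n \<longrightarrow> \<tau> i = \<sigma> i}"
  have "\<forall>i\<in>block1 n. \<tau> i = c"
  proof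
    fix i assume i: "i \<in> block1 n"
    then have "i \<notin> block2 n" by (rule b12_disj)
    then show "\<tau> i = c" using t assms i by simp
  qed
  then show "\<tau> \<in> Kset n" using t unfolding Kset_def by blast
qed

lemma sub_K2:
  assumes "\<forall>i\<in>block2 n. \<sigma> i = c"
  shows "{\<tau> \<in> configs n. \<forall>i. i \<notin> block1 n \<longrightarrow> \<tau> i = \<sigma> i} \<subseteq> Kset n"
proof
  fix \<tau> assume t: "\<tau> \<in> {\<tau> \<in> configs n. \<forall>i. i \<notin> block1 n \<longrightarrow> \<tau> i = \<sigma> i}"
  have "\<forall>i\<in>block2 n. \<tau> i = c"
  proof
    fix i assume i: "i \<in> block2 n"
    then have "i \<notin> block1 n" by (rule b21_disj)
    then show "\<tau> i = c" using t assms i by simp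
  qed
  then show "\<tau> \<in> Kset n" using t unfolding Kset_def by blast
qed

lemma fill_const: "\<forall>i\<in>B. fill \<sigma> B c i = c" unfolding fill_def by simp

lemma to_plus:
  assumes "\<sigma> \<in> Kset n"
  shows "rch n (Kset n) \<sigma> (kap n 1 1)"
proof -
  have s: "\<sigma> \<in> configs n" using assms unfolding Kset_def by auto
  from assms consider c where "\<forall>i\<in>block1 n. \<sigma> i = c" | c where "\<forall>i\<in>block2 n. \<sigma> i = c"
    unfolding Kset_def by auto
  then show ?thesis
  proof cases
    case 1
    let ?s1 = "fill \<sigma> (block2 n) 1"
    have r1: "rch n {\<tau> \<in> configs n. \<forall>i. i \<notin> block2 n \<longrightarrow> \<tau> i = \<sigma> i} \<sigma> ?s1" by (rule rch_fill[OF b2_verts _ s]) simp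
    have c1: "?s1 \<in> configs n" by (rule fill_cfg[OF b2_verts _ s]) simp
    have r2: "rch n {\<tau> \<in> configs n. \<forall>i. i \<notin> block1 n \<longrightarrow> \<tau> i = ?s1 i} ?s1 (fill ?s1 (block1 n) 1)" by (rule rch_fill[OF b1_verts _ c1]) simp
    have "rch n (Kset n) \<sigma> (fill ?s1 (block1 n) 1)"
      by (rule rch_trans[OF rch_mono[OF r1 sub_K1[OF 1]] rch_mono[OF r2 sub_K2[OF fill_const]]])
    then show ?thesis using fill_fill_kap(1)[OF s] by simp
  next
    case 2
    let ?s1 = "fill \<sigma> (block1 n) 1"
    have r1: "rch n {\<tau> \<in> configs n. \<forall>i. i \<notin> block1 n \<longrightarrow> \<tau> i = \<sigma> i} \<sigma> ?s1" by (rule rch_fill[OF b1_verts _ s]) simp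
    have c1: "?s1 \<in> configs n" by (rule fill_cfg[OF b1_verts _ s]) simp
    have r2: "rch n {\<tau> \<in> configs n. \<forall>i. i \<notin> block2 n \<longrightarrow> \<tau> i = ?s1 i} ?s1 (fill ?s1 (block2 n) 1)" by (rule rch_fill[OF b2_verts _ c1]) simp
    have "rch n (Kset n) \<sigma> (fill ?s1 (block2 n) 1)"
      by (rule rch_trans[OF rch_mono[OF r1 sub_K2[OF 2]] rch_mono[OF r2 sub_K1[OF fill_const]]])
    then show ?thesis using fill_fill_kap(2)[OF s] by simp
  qed
qed




lemma const_P1: "\<forall>i\<in>block1 n. \<sigma> i = c \<Longrightarrow> P1 n \<sigma> = 0 \<or> P1 n \<sigma> = n"
proof -
  assume a: "\<forall>i\<in>block1 n. \<sigma> i = c"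
  show ?thesis
  proof (cases "c = 1")
    case True
    then have "{i \<in> block1 n. \<sigma> i = 1} = block1 n" using a by auto
    then show ?thesis unfolding P1_def by simp
  next
    case False
    then have "{i \<in> block1 n. \<sigma> i = 1} = {}" using a by auto
    then show ?thesis unfolding P1_def by simp
  qed
qed

lemma const_P2: "\<forall>i\<in>block2 n. \<sigma> i = c \<Longrightarrow> P2 n \<sigma> = 0 \<or> P2 n \<sigma> = n"
proof -
  assume a: "\<forall>i\<in>block2 n. \<sigma> i = c"
  show ?thesis
  proof (cases "c = 1")
    case True
    then have "{i \<in> block2 n. \<sigma> i = 1} = block2 n" using a by auto
    then show ?thesis unfolding P2_def by simp
  next
    case False
    then have "{i \<in> block2 n. \<sigma> i = 1} = {}" using a by auto
    then show ?thesis unfolding P2_def by simp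
  qed
qed

lemma K_le:
  assumes "\<sigma> \<in> Kset n" "\<bar>\<epsilon>\<bar> \<le> 1"
  shows "Ham n \<epsilon> 0 \<sigma> \<le> Gam n \<epsilon>"
proof -
  have s: "\<sigma> \<in> configs n" using assms unfolding Kset_def by auto
  have "P1 n \<sigma> = 0 \<or> P1 n \<sigma> = n \<or> P2 n \<sigma> = 0 \<or> P2 n \<sigma> = n"
    using assms(1) const_P1 const_P2 unfolding Kset_def by blast
  then show ?thesis unfolding Ham_eq[OF s] by (rule K_tuple[OF ok_cfg[OF s] _ assms(2)])
qed

lemma P1_const: "\<sigma> \<in> configs n \<Longrightarrow> P1 n \<sigma> = 0 \<or> P1 n \<sigma> = n \<Longrightarrow> \<exists>c. \<forall>i\<in>block1 n. \<sigma> i = c"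
  using P1_full P1_empty by blast
lemma P2_const: "\<sigma> \<in> configs n \<Longrightarrow> P2 n \<sigma> = 0 \<or> P2 n \<sigma> = n \<Longrightarrow> \<exists>c. \<forall>i\<in>block2 n. \<sigma> i = c"
  using P2_full P2_empty by blast

lemma cs_block: "cs n \<epsilon> p1 p2 a \<Longrightarrow> p1 = 0 \<or> p1 = n \<or> p2 = 0 \<or> p2 = n"
  unfolding cs_def by (auto split: if_splits)

lemma Cstar_K: "\<zeta> \<in> Cstar n \<epsilon> \<Longrightarrow> \<zeta> \<in> Kset n"
proof -
  assume z: "\<zeta> \<in> Cstar n \<epsilon>"
  then have c: "\<zeta> \<in> configs n" and "cs n \<epsilon> (P1 n \<zeta>) (P2 n \<zeta>) (AA n \<zeta>)" using Cstar_iff by auto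
  then have "(P1 n \<zeta> = 0 \<or> P1 n \<zeta> = n) \<or> (P2 n \<zeta> = 0 \<or> P2 n \<zeta> = n)" using cs_block by blast
  then show ?thesis using P1_const[OF c] P2_const[OF c] c unfolding Kset_def by blast
qed

lemma Cstar_Gam: "\<zeta> \<in> Cstar n \<epsilon> \<Longrightarrow> Ham n \<epsilon> 0 \<zeta> = Gam n \<epsilon>"
  using Cstar_iff Ham_eq cs_Gam by metis

lemma stable_K:
  assumes "s \<in> stable_states n \<epsilon> 0" "\<bar>\<epsilon>\<bar> \<le> 1" "n \<ge> 2"
  shows "s \<in> Kset n"
proof -
  have c: "s \<in> configs n" using assms(1) unfolding stable_states_def by auto
  show ?thesis using stable_P[OF assms] P1_const[OF c] c unfolding Kset_def by blast
qed

lemma path_fin: "is_path n a b \<omega> \<Longrightarrow> finite (Ham n \<epsilon> 0 ` set \<omega>) \<and> Ham n \<epsilon> 0 ` set \<omega> \<noteq> {}"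
  unfolding is_path_def by auto

lemma path_K:
  assumes "rch n (Kset n) s1 \<zeta>" "rch n (Kset n) \<zeta> s2"
  shows "\<exists>\<omega>. is_path n s1 s2 \<omega> \<and> set \<omega> \<subseteq> Kset n \<and> \<zeta> \<in> set \<omega>"
proof -
  have KC: "Kset n \<subseteq> configs n" unfolding Kset_def by auto
  have s2: "s2 \<in> Kset n" using rch_mem[OF assms(2)] by blast
  have p0: "is_path n s2 s2 [s2]" unfolding is_path_def using s2 KC by auto
  obtain \<omega>2 where w2: "is_path n \<zeta> s2 \<omega>2" "set \<omega>2 \<subseteq> Kset n \<union> set [s2]"
    using rch_path[OF assms(2) KC p0] by blast
  obtain \<omega> where w: "is_path n s1 s2 \<omega>" "set \<omega> \<subseteq> Kset n \<union> set \<omega>2" "set \<omega>2 \<subseteq> set \<omega>"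
    using rch_path[OF assms(1) KC w2(1)] by blast
  have "\<zeta> \<in> set \<omega>2" using w2(1) unfolding is_path_def by (metis hd_in_set)
  moreover have "set \<omega> \<subseteq> Kset n" using w(2) w2(2) s2 by auto
  ultimately show ?thesis using w by blast
qed

theorem theorem2p3:
  fixes n :: nat and \<epsilon> :: real and s1 s2 :: "nat \<Rightarrow> int"
  assumes "n \<ge> 2" and "-1 \<le> \<epsilon>" and "\<epsilon> \<le> 1"
    and "s1 \<in> stable_states n \<epsilon> 0" and "s2 \<in> stable_states n \<epsilon> 0" and "s1 \<noteq> s2"
  shows "is_gate n \<epsilon> 0 (Cstar n \<epsilon>) s1 s2"
proof -
  have e1: "\<bar>\<epsilon>\<bar> \<le> 1" using assms(2,3) by auto
  let ?G = "Gam n \<epsilon>"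
  have K1: "s1 \<in> Kset n" and K2: "s2 \<in> Kset n" using stable_K[OF assms(4) e1 assms(1)] stable_K[OF assms(5) e1 assms(1)] by auto
  have lower: "path_height n \<epsilon> 0 \<omega> \<ge> ?G" if w: "is_path n s1 s2 \<omega>" for \<omega>
  proof -
    obtain \<zeta> where z: "\<zeta> \<in> set \<omega>" "Ham n \<epsilon> 0 \<zeta> > ?G \<or> \<zeta> \<in> Cstar n \<epsilon>"
      using gate_core[OF assms w] by blast
    have "Ham n \<epsilon> 0 \<zeta> \<ge> ?G" using z(2) Cstar_Gam by force
    moreover have "Ham n \<epsilon> 0 \<zeta> \<le> path_height n \<epsilon> 0 \<omega>" unfolding path_height_def
      using path_fin[OF w] z(1) by (intro Max_ge) auto
    ultimately show ?thesis by linarith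
  qed
  have upper: "path_height n \<epsilon> 0 \<omega> \<le> ?G" if "set \<omega> \<subseteq> Kset n" "is_path n s1 s2 \<omega>" for \<omega>
    unfolding path_height_def using path_fin[OF that(2)] that(1) K_le[OF _ e1]
    by (subst Max_le_iff) auto
  have thru: "\<exists>\<omega>. is_path n s1 s2 \<omega> \<and> set \<omega> \<subseteq> Kset n \<and> \<zeta> \<in> set \<omega>" if "\<zeta> \<in> Kset n" for \<zeta>
  proof -
    have "rch n (Kset n) s1 \<zeta>" using rch_trans[OF to_plus[OF K1] rch_sym[OF to_plus[OF that]]] .
    moreover have "rch n (Kset n) \<zeta> s2" using rch_trans[OF to_plus[OF that] rch_sym[OF to_plus[OF K2]]] .
    ultimately show ?thesis by (rule path_K)
  qed
  obtain \<omega>0 where w0: "is_path n s1 s2 \<omega>0" "set \<omega>0 \<subseteq> Kset n" using thru[OF K1] by blast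
  have hts: "{path_height n \<epsilon> 0 \<omega> | \<omega>. is_path n s1 s2 \<omega>} = {path_height n \<epsilon> 0 \<omega> | \<omega>. is_path n s1 s2 \<omega>}" ..
  have ch: "comm_height n \<epsilon> 0 s1 s2 = ?G"
    unfolding comm_height_def
  proof (rule cInf_eq_minimum)
    show "?G \<in> {path_height n \<epsilon> 0 \<omega> | \<omega>. is_path n s1 s2 \<omega>}"
      using lower[OF w0(1)] upper[OF w0(2,1)] w0(1) by (intro CollectI exI[of _ \<omega>0]) simp
  next
    fix x assume "x \<in> {path_height n \<epsilon> 0 \<omega> | \<omega>. is_path n s1 s2 \<omega>}"
    then show "?G \<le> x" using lower by blast
  qed
  have sub: "Cstar n \<epsilon> \<subseteq> min_saddles n \<epsilon> 0 s1 s2"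
  proof
    fix \<zeta> assume z: "\<zeta> \<in> Cstar n \<epsilon>"
    obtain \<omega> where w: "is_path n s1 s2 \<omega>" "set \<omega> \<subseteq> Kset n" "\<zeta> \<in> set \<omega>" using thru[OF Cstar_K[OF z]] by blast
    have ph: "path_height n \<epsilon> 0 \<omega> = ?G" using lower[OF w(1)] upper[OF w(2,1)] by simp
    then have "\<omega> \<in> opt_paths n \<epsilon> 0 s1 s2" unfolding opt_paths_def using w(1) ch by simp
    then show "\<zeta> \<in> min_saddles n \<epsilon> 0 s1 s2" unfolding min_saddles_def
      using w(3) ph Cstar_Gam[OF z] by auto
  qed
  have hit: "set \<omega> \<inter> Cstar n \<epsilon> \<noteq> {}" if o: "\<omega> \<in> opt_paths n \<epsilon> 0 s1 s2" for \<omega>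
  proof -
    have w: "is_path n s1 s2 \<omega>" and ph: "path_height n \<epsilon> 0 \<omega> = ?G" using o ch unfolding opt_paths_def by auto
    obtain \<zeta> where z: "\<zeta> \<in> set \<omega>" "Ham n \<epsilon> 0 \<zeta> > ?G \<or> \<zeta> \<in> Cstar n \<epsilon>"
      using gate_core[OF assms w] by blast
    have "Ham n \<epsilon> 0 \<zeta> \<le> path_height n \<epsilon> 0 \<omega>" unfolding path_height_def
      using path_fin[OF w] z(1) by (intro Max_ge) auto
    then have "\<zeta> \<in> Cstar n \<epsilon>" using z(2) ph by linarith
    then show ?thesis using z(1) by blast
  qed
  show ?thesis unfolding is_gate_def using sub hit by blast
qed


end
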